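(* Let $R$ be a left coherent ring and let $M$ be a finitely presented left $R$-module with finite quasi-projective dimension. If $\mathrm{Ext}^n_R(M,M\oplus R)=0$ for all $n\geqslant 1$, then $M$ is projective.
   Context: A ring is left coherent if every finitely generated left ideal is finitely presented; then the category $R\text{-mod}$ of finitely presented left $R$-modules is abelian with enough projectives. Complexes are indexed homologically ($d_i:X_i\to X_{i-1}$); $\sup X_\bullet=\sup\{i:X_i\neq0\}$, $\inf X_\bullet=\inf\{i:X_i\ne0\}$, $\mathrm{hsup}\,X_\bullet=\sup\{i:H_i(X_\bullet)\neq0\}$. For an abelian category $\mathcal{A}$ with enough projectives, a quasi-projective resolution of $M\in\mathcal{A}$ is a complex $P_\bullet$ with $\inf P_\bullet>-\infty$, all terms projective, such that for every $j\geqslant \inf P_\bullet$ there is $n_j\geqslant0$ with $H_j(P_\bullet)\cong M^{n_j}$, not all $n_j$ zero; it is finite if $\sup P_\bullet<\infty$. For $M\neq0$, $\mathrm{qpd}_{\mathcal{A}}M=\inf\{\sup P_\bullet-\mathrm{hsup}\,P_\bullet\}$ over finite quasi-projective resolutions ($\infty$ if none), and $\mathrm{qpd}\,0=0$. Here the quasi-projective dimension of $M$ is taken in the abelian category of finitely presented left $R$-modules. *)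

theory Defs
  imports "HOL-Algebra.Module"
begin

text \<open>HOL-Algebra's locale module requires a commutative ring; for left modules
over an arbitrary ring we reuse its axioms (which do not involve commutativity).\<close>

definition left_module :: "'r ring \<Rightarrow> ('r, 'm) module \<Rightarrow> bool" where
  "left_module R M \<longleftrightarrow> ring R \<and> abelian_group M \<and> module_axioms R M"

definition lin_map :: "'r ring \<Rightarrow> ('r, 'm) module \<Rightarrow> ('r, 'n) module \<Rightarrow> ('m \<Rightarrow> 'n) \<Rightarrow> bool" where
  "lin_map R M N f \<longleftrightarrow> f \<in> carrier M \<rightarrow> carrier N
     \<and> (\<forall>x\<in>carrier M. \<forall>y\<in>carrier M. f (x \<oplus>\<^bsub>M\<^esub> y) = f x \<oplus>\<^bsub>N\<^esub> f y)
     \<and> (\<forall>r\<in>carrier R. \<forall>x\<in>carrier M. f (r \<odot>\<^bsub>M\<^esub> x) = r \<odot>\<^bsub>N\<^esub> f x)"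

definition mod_iso :: "'r ring \<Rightarrow> ('r, 'm) module \<Rightarrow> ('r, 'n) module \<Rightarrow> bool" where
  "mod_iso R M N \<longleftrightarrow> (\<exists>f. lin_map R M N f \<and> bij_betw f (carrier M) (carrier N))"

definition is_zero_mod :: "('r, 'm) module \<Rightarrow> bool" where
  "is_zero_mod M \<longleftrightarrow> carrier M = {\<zero>\<^bsub>M\<^esub>}"

definition submod :: "('r, 'm) module \<Rightarrow> 'm set \<Rightarrow> ('r, 'm) module" where
  "submod M S = M\<lparr>carrier := S\<rparr>"

definition span :: "'r ring \<Rightarrow> ('r, 'm) module \<Rightarrow> 'm set \<Rightarrow> 'm set" where
  "span R M S = {finsum M (\<lambda>x. c x \<odot>\<^bsub>M\<^esub> x) S | c. c \<in> S \<rightarrow> carrier R}"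

definition fin_gen :: "'r ring \<Rightarrow> ('r, 'm) module \<Rightarrow> bool" where
  "fin_gen R M \<longleftrightarrow> (\<exists>S. finite S \<and> S \<subseteq> carrier M \<and> span R M S = carrier M)"

definition ring_mod :: "'r ring \<Rightarrow> ('r, 'r) module" where
  "ring_mod R = \<lparr>carrier = carrier R, monoid.mult = monoid.mult R, one = \<one>\<^bsub>R\<^esub>,
     zero = \<zero>\<^bsub>R\<^esub>, add = add R, smult = monoid.mult R\<rparr>"

definition pow_mod :: "('r, 'm) module \<Rightarrow> nat \<Rightarrow> ('r, nat \<Rightarrow> 'm) module" where
  "pow_mod M n = \<lparr>carrier = {f. (\<forall>i<n. f i \<in> carrier M) \<and> (\<forall>i\<ge>n. f i = \<zero>\<^bsub>M\<^esub>)},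
     monoid.mult = undefined, one = undefined,
     zero = (\<lambda>i. \<zero>\<^bsub>M\<^esub>), add = (\<lambda>f g i. f i \<oplus>\<^bsub>M\<^esub> g i),
     smult = (\<lambda>r f i. r \<odot>\<^bsub>M\<^esub> f i)\<rparr>"

definition free_mod :: "'r ring \<Rightarrow> nat \<Rightarrow> ('r, nat \<Rightarrow> 'r) module" where
  "free_mod R n = pow_mod (ring_mod R) n"

definition dsum :: "('r, 'm) module \<Rightarrow> ('r, 'n) module \<Rightarrow> ('r, 'm \<times> 'n) module" where
  "dsum M N = \<lparr>carrier = carrier M \<times> carrier N,
     monoid.mult = undefined, one = undefined,
     zero = (\<zero>\<^bsub>M\<^esub>, \<zero>\<^bsub>N\<^esub>),
     add = (\<lambda>p q. (fst p \<oplus>\<^bsub>M\<^esub> fst q, snd p \<oplus>\<^bsub>N\<^esub> snd q)),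
     smult = (\<lambda>r p. (r \<odot>\<^bsub>M\<^esub> fst p, r \<odot>\<^bsub>N\<^esub> snd p))\<rparr>"

definition fin_pres :: "'r ring \<Rightarrow> ('r, 'm) module \<Rightarrow> bool" where
  "fin_pres R M \<longleftrightarrow> left_module R M \<and>
     (\<exists>n \<pi>. lin_map R (free_mod R n) M \<pi> \<and> \<pi> ` carrier (free_mod R n) = carrier M
        \<and> fin_gen R (submod (free_mod R n) {x \<in> carrier (free_mod R n). \<pi> x = \<zero>\<^bsub>M\<^esub>}))"

definition left_coherent :: "'r ring \<Rightarrow> bool" where
  "left_coherent R \<longleftrightarrow> ring R \<and>
     (\<forall>S. finite S \<and> S \<subseteq> carrier R \<longrightarrow>
        fin_pres R (submod (ring_mod R) (span R (ring_mod R) S)))"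

text \<open>Projective objects of R-mod: finitely presented modules that are direct summands
  of a finitely generated free module R^n.\<close>
definition projective :: "'r ring \<Rightarrow> ('r, 'm) module \<Rightarrow> bool" where
  "projective R P \<longleftrightarrow> fin_pres R P \<and>
     (\<exists>n s p. lin_map R P (free_mod R n) s \<and> lin_map R (free_mod R n) P p
        \<and> (\<forall>x\<in>carrier P. p (s x) = x))"

definition is_complex :: "'r ring \<Rightarrow> (int \<Rightarrow> ('r, 'b) module) \<Rightarrow> (int \<Rightarrow> 'b \<Rightarrow> 'b) \<Rightarrow> bool" where
  "is_complex R X d \<longleftrightarrow>
     (\<forall>i. left_module R (X i) \<and> lin_map R (X i) (X (i - 1)) (d i)) \<and>
     (\<forall>i. \<forall>x\<in>carrier (X i). d (i - 1) (d i x) = \<zero>\<^bsub>X (i - 2)\<^esub>)"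

definition cycles :: "(int \<Rightarrow> ('r, 'b) module) \<Rightarrow> (int \<Rightarrow> 'b \<Rightarrow> 'b) \<Rightarrow> int \<Rightarrow> 'b set" where
  "cycles X d j = {x \<in> carrier (X j). d j x = \<zero>\<^bsub>X (j - 1)\<^esub>}"

definition boundaries :: "(int \<Rightarrow> ('r, 'b) module) \<Rightarrow> (int \<Rightarrow> 'b \<Rightarrow> 'b) \<Rightarrow> int \<Rightarrow> 'b set" where
  "boundaries X d j = d (j + 1) ` carrier (X (j + 1))"

definition homology :: "(int \<Rightarrow> ('r, 'b) module) \<Rightarrow> (int \<Rightarrow> 'b \<Rightarrow> 'b) \<Rightarrow> int \<Rightarrow> ('r, 'b set) module" where
  "homology X d j =
    (let B = boundaries X d j; Z = cycles X d j in
     \<lparr>carrier = (\<lambda>z. {z \<oplus>\<^bsub>X j\<^esub> b | b. b \<in> B}) ` Z,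
      monoid.mult = undefined, one = undefined,
      zero = B,
      add = (\<lambda>U V. {u \<oplus>\<^bsub>X j\<^esub> v | u v. u \<in> U \<and> v \<in> V}),
      smult = (\<lambda>r U. {(r \<odot>\<^bsub>X j\<^esub> u) \<oplus>\<^bsub>X j\<^esub> b | u b. u \<in> U \<and> b \<in> B})\<rparr>)"

definition cx_nonzero :: "(int \<Rightarrow> ('r, 'b) module) \<Rightarrow> int \<Rightarrow> bool" where
  "cx_nonzero X i \<longleftrightarrow> \<not> is_zero_mod (X i)"

definition cx_inf :: "(int \<Rightarrow> ('r, 'b) module) \<Rightarrow> int" where
  "cx_inf X = Inf {i. cx_nonzero X i}"

text \<open>Finite quasi-projective resolution of M in R-mod: a nonzero complex of projective
  objects, bounded below and above (inf > -infinity, sup < infinity), with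
  H_j(X) isomorphic to M^(n_j) for all j >= inf X, not all n_j zero.\<close>
definition fin_qp_resolution :: "'r ring \<Rightarrow> ('r, 'm) module \<Rightarrow>
    (int \<Rightarrow> ('r, 'b) module) \<Rightarrow> (int \<Rightarrow> 'b \<Rightarrow> 'b) \<Rightarrow> bool" where
  "fin_qp_resolution R M X d \<longleftrightarrow>
     is_complex R X d \<and> (\<forall>i. projective R (X i)) \<and>
     (\<exists>i. cx_nonzero X i) \<and>
     (\<exists>a. \<forall>i. cx_nonzero X i \<longrightarrow> a \<le> i) \<and>
     (\<exists>b. \<forall>i. cx_nonzero X i \<longrightarrow> i \<le> b) \<and>
     (\<exists>n :: int \<Rightarrow> nat.
        (\<forall>j\<ge>cx_inf X. mod_iso R (homology X d j) (pow_mod M (n j))) \<and>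
        (\<exists>j\<ge>cx_inf X. n j \<noteq> 0))"

definition proj_resolution :: "'r ring \<Rightarrow> ('r, 'm) module \<Rightarrow>
    (nat \<Rightarrow> ('r, 'q) module) \<Rightarrow> (nat \<Rightarrow> 'q \<Rightarrow> 'q) \<Rightarrow> ('q \<Rightarrow> 'm) \<Rightarrow> bool" where
  "proj_resolution R M Q e \<epsilon> \<longleftrightarrow>
     (\<forall>n. projective R (Q n)) \<and>
     (\<forall>n\<ge>1. lin_map R (Q n) (Q (n - 1)) (e n)) \<and>
     lin_map R (Q 0) M \<epsilon> \<and> \<epsilon> ` carrier (Q 0) = carrier M \<and>
     {x \<in> carrier (Q 0). \<epsilon> x = \<zero>\<^bsub>M\<^esub>} = e 1 ` carrier (Q 1) \<and>
     (\<forall>n\<ge>1. {x \<in> carrier (Q n). e n x = \<zero>\<^bsub>Q (n - 1)\<^esub>} = e (n + 1) ` carrier (Q (n + 1)))"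

text \<open>Ext^n_R(M,N) = H^n(Hom_R(Q,N)) = 0 for all n >= 1, where Q is a projective
  resolution of M: every n-cocycle of Hom_R(Q,N) is a coboundary.\<close>
definition ext_vanish_pos :: "'r ring \<Rightarrow> (nat \<Rightarrow> ('r, 'q) module) \<Rightarrow> (nat \<Rightarrow> 'q \<Rightarrow> 'q) \<Rightarrow>
    ('r, 'n) module \<Rightarrow> bool" where
  "ext_vanish_pos R Q e N \<longleftrightarrow>
     (\<forall>n\<ge>1. \<forall>\<phi>. lin_map R (Q n) N \<phi> \<and>
        (\<forall>x\<in>carrier (Q (n + 1)). \<phi> (e (n + 1) x) = \<zero>\<^bsub>N\<^esub>) \<longrightarrow>
        (\<exists>\<psi>. lin_map R (Q (n - 1)) N \<psi> \<and> (\<forall>x\<in>carrier (Q n). \<phi> x = \<psi> (e n x))))"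

end

theory Submission
  imports Defs
begin

lemma lm_ring: "left_module R M \<Longrightarrow> ring R"
  by (simp add: left_module_def)
lemma lm_ag: "left_module R M \<Longrightarrow> abelian_group M"
  by (simp add: left_module_def)
lemma lm_closed: "left_module R M \<Longrightarrow> a \<in> carrier R \<Longrightarrow> x \<in> carrier M \<Longrightarrow> a \<odot>\<^bsub>M\<^esub> x \<in> carrier M"
  by (simp add: left_module_def module_axioms_def)
lemma lm_ldistr: "left_module R M \<Longrightarrow> a \<in> carrier R \<Longrightarrow> b \<in> carrier R \<Longrightarrow> x \<in> carrier M \<Longrightarrow>
   (a \<oplus>\<^bsub>R\<^esub> b) \<odot>\<^bsub>M\<^esub> x = a \<odot>\<^bsub>M\<^esub> x \<oplus>\<^bsub>M\<^esub> b \<odot>\<^bsub>M\<^esub> x"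
  by (simp add: left_module_def module_axioms_def)
lemma lm_rdistr: "left_module R M \<Longrightarrow> a \<in> carrier R \<Longrightarrow> x \<in> carrier M \<Longrightarrow> y \<in> carrier M \<Longrightarrow>
   a \<odot>\<^bsub>M\<^esub> (x \<oplus>\<^bsub>M\<^esub> y) = a \<odot>\<^bsub>M\<^esub> x \<oplus>\<^bsub>M\<^esub> a \<odot>\<^bsub>M\<^esub> y"
  by (simp add: left_module_def module_axioms_def)
lemma lm_assoc: "left_module R M \<Longrightarrow> a \<in> carrier R \<Longrightarrow> b \<in> carrier R \<Longrightarrow> x \<in> carrier M \<Longrightarrow>
   (a \<otimes>\<^bsub>R\<^esub> b) \<odot>\<^bsub>M\<^esub> x = a \<odot>\<^bsub>M\<^esub> (b \<odot>\<^bsub>M\<^esub> x)"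
  by (simp add: left_module_def module_axioms_def)
lemma lm_one: "left_module R M \<Longrightarrow> x \<in> carrier M \<Longrightarrow> \<one>\<^bsub>R\<^esub> \<odot>\<^bsub>M\<^esub> x = x"
  by (simp add: left_module_def module_axioms_def)

lemma ag_cancel_self: "abelian_group M \<Longrightarrow> x \<in> carrier M \<Longrightarrow> x \<oplus>\<^bsub>M\<^esub> x = x \<Longrightarrow> x = \<zero>\<^bsub>M\<^esub>"
proof -
  assume M: "abelian_group M" and x: "x \<in> carrier M" and e: "x \<oplus>\<^bsub>M\<^esub> x = x"
  interpret abelian_group M by (rule M)
  have "x \<oplus>\<^bsub>M\<^esub> x = x \<oplus>\<^bsub>M\<^esub> \<zero>\<^bsub>M\<^esub>" using e x by simp
  then show ?thesis using x e by simp
qed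

lemma ag_zero_closed: "abelian_group M \<Longrightarrow> \<zero>\<^bsub>M\<^esub> \<in> carrier M"
  by (simp add: abelian_group.axioms(1) abelian_monoid.zero_closed)
lemma ag_r_zero: "abelian_group M \<Longrightarrow> x \<in> carrier M \<Longrightarrow> x \<oplus>\<^bsub>M\<^esub> \<zero>\<^bsub>M\<^esub> = x"
  by (simp add: abelian_group.axioms(1) abelian_monoid.r_zero)
lemma ag_l_zero: "abelian_group M \<Longrightarrow> x \<in> carrier M \<Longrightarrow> \<zero>\<^bsub>M\<^esub> \<oplus>\<^bsub>M\<^esub> x = x"
  by (simp add: abelian_group.axioms(1) abelian_monoid.l_zero)
lemma ag_add_closed: "abelian_group M \<Longrightarrow> x \<in> carrier M \<Longrightarrow> y \<in> carrier M \<Longrightarrow> x \<oplus>\<^bsub>M\<^esub> y \<in> carrier M"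
  by (simp add: abelian_group.axioms(1) abelian_monoid.a_closed)
lemma ag_minus_closed: "abelian_group M \<Longrightarrow> x \<in> carrier M \<Longrightarrow> y \<in> carrier M \<Longrightarrow> x \<ominus>\<^bsub>M\<^esub> y \<in> carrier M"
  by (simp add: abelian_group.minus_closed)

lemma lm_smult_zero: "left_module R M \<Longrightarrow> a \<in> carrier R \<Longrightarrow> a \<odot>\<^bsub>M\<^esub> \<zero>\<^bsub>M\<^esub> = \<zero>\<^bsub>M\<^esub>"
proof -
  assume M: "left_module R M" and a: "a \<in> carrier R"
  interpret abelian_group M using lm_ag[OF M] .
  have "a \<odot>\<^bsub>M\<^esub> \<zero>\<^bsub>M\<^esub> \<oplus>\<^bsub>M\<^esub> a \<odot>\<^bsub>M\<^esub> \<zero>\<^bsub>M\<^esub> = a \<odot>\<^bsub>M\<^esub> \<zero>\<^bsub>M\<^esub>"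
    using lm_rdistr[OF M a, of "\<zero>\<^bsub>M\<^esub>" "\<zero>\<^bsub>M\<^esub>"] by simp
  then show ?thesis using ag_cancel_self[OF lm_ag[OF M]] lm_closed[OF M a] by simp
qed

lemma lm_smult_minus: "left_module R M \<Longrightarrow> a \<in> carrier R \<Longrightarrow> x \<in> carrier M \<Longrightarrow>
   a \<odot>\<^bsub>M\<^esub> (\<ominus>\<^bsub>M\<^esub> x) = \<ominus>\<^bsub>M\<^esub> (a \<odot>\<^bsub>M\<^esub> x)"
proof -
  assume M: "left_module R M" and a: "a \<in> carrier R" and x: "x \<in> carrier M"
  interpret abelian_group M using lm_ag[OF M] .
  have "a \<odot>\<^bsub>M\<^esub> (\<ominus>\<^bsub>M\<^esub> x) \<oplus>\<^bsub>M\<^esub> a \<odot>\<^bsub>M\<^esub> x = \<zero>\<^bsub>M\<^esub>"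
    using lm_rdistr[OF M a, of "\<ominus>\<^bsub>M\<^esub> x" x] x lm_smult_zero[OF M a] by (simp add: l_neg)
  then show ?thesis using x lm_closed[OF M a] by (metis minus_equality a_inv_closed)
qed

lemma lm_smult_diff: "left_module R M \<Longrightarrow> a \<in> carrier R \<Longrightarrow> x \<in> carrier M \<Longrightarrow> y \<in> carrier M \<Longrightarrow>
   a \<odot>\<^bsub>M\<^esub> (x \<ominus>\<^bsub>M\<^esub> y) = a \<odot>\<^bsub>M\<^esub> x \<ominus>\<^bsub>M\<^esub> a \<odot>\<^bsub>M\<^esub> y"
  by (simp add: abelian_group.minus_eq lm_ag lm_rdistr lm_smult_minus
      abelian_group.a_inv_closed)

lemma lin_mapD:
  assumes "lin_map R A B f"
  shows "\<And>x. x \<in> carrier A \<Longrightarrow> f x \<in> carrier B"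
    and "\<And>x y. x \<in> carrier A \<Longrightarrow> y \<in> carrier A \<Longrightarrow> f (x \<oplus>\<^bsub>A\<^esub> y) = f x \<oplus>\<^bsub>B\<^esub> f y"
    and "\<And>r x. r \<in> carrier R \<Longrightarrow> x \<in> carrier A \<Longrightarrow> f (r \<odot>\<^bsub>A\<^esub> x) = r \<odot>\<^bsub>B\<^esub> f x"
  using assms by (auto simp: lin_map_def)

lemma lin_mapI:
  assumes "\<And>x. x \<in> carrier A \<Longrightarrow> f x \<in> carrier B"
    and "\<And>x y. x \<in> carrier A \<Longrightarrow> y \<in> carrier A \<Longrightarrow> f (x \<oplus>\<^bsub>A\<^esub> y) = f x \<oplus>\<^bsub>B\<^esub> f y"
    and "\<And>r x. r \<in> carrier R \<Longrightarrow> x \<in> carrier A \<Longrightarrow> f (r \<odot>\<^bsub>A\<^esub> x) = r \<odot>\<^bsub>B\<^esub> f x"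
  shows "lin_map R A B f"
  using assms by (auto simp: lin_map_def)

lemma add_zero_hom:
  assumes A: "abelian_group A" and B: "abelian_group B"
    and f: "\<And>x. x \<in> carrier A \<Longrightarrow> f x \<in> carrier B"
    and add: "\<And>x y. x \<in> carrier A \<Longrightarrow> y \<in> carrier A \<Longrightarrow> f (x \<oplus>\<^bsub>A\<^esub> y) = f x \<oplus>\<^bsub>B\<^esub> f y"
  shows "f \<zero>\<^bsub>A\<^esub> = \<zero>\<^bsub>B\<^esub>"
proof -
  have z: "\<zero>\<^bsub>A\<^esub> \<in> carrier A" using ag_zero_closed[OF A] .
  have "f \<zero>\<^bsub>A\<^esub> \<oplus>\<^bsub>B\<^esub> f \<zero>\<^bsub>A\<^esub> = f \<zero>\<^bsub>A\<^esub>"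
    using add[OF z z] ag_r_zero[OF A z] by simp
  then show ?thesis using ag_cancel_self[OF B] f[OF z] by blast
qed

lemma add_minus_hom:
  assumes A: "abelian_group A" and B: "abelian_group B"
    and f: "\<And>x. x \<in> carrier A \<Longrightarrow> f x \<in> carrier B"
    and add: "\<And>x y. x \<in> carrier A \<Longrightarrow> y \<in> carrier A \<Longrightarrow> f (x \<oplus>\<^bsub>A\<^esub> y) = f x \<oplus>\<^bsub>B\<^esub> f y"
    and x: "x \<in> carrier A" and y: "y \<in> carrier A"
  shows "f (x \<ominus>\<^bsub>A\<^esub> y) = f x \<ominus>\<^bsub>B\<^esub> f y"
proof -
  interpret A: abelian_group A by (rule A)
  interpret B: abelian_group B by (rule B)
  have "f (\<ominus>\<^bsub>A\<^esub> y) \<oplus>\<^bsub>B\<^esub> f y = \<zero>\<^bsub>B\<^esub>"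
    using add[of "\<ominus>\<^bsub>A\<^esub> y" y] y add_zero_hom[OF A B f add] by (simp add: A.l_neg)
  then have "f (\<ominus>\<^bsub>A\<^esub> y) = \<ominus>\<^bsub>B\<^esub> f y"
    using f y by (metis A.a_inv_closed B.minus_equality)
  then show ?thesis using add[of x "\<ominus>\<^bsub>A\<^esub> y"] x y by (simp add: A.minus_eq B.minus_eq)
qed

lemma lin_zero: "lin_map R A B f \<Longrightarrow> left_module R A \<Longrightarrow> left_module R B \<Longrightarrow> f \<zero>\<^bsub>A\<^esub> = \<zero>\<^bsub>B\<^esub>"
  by (rule add_zero_hom[OF lm_ag lm_ag]) (auto dest: lin_mapD)

lemma lin_diff: "lin_map R A B f \<Longrightarrow> left_module R A \<Longrightarrow> left_module R B \<Longrightarrow>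
   x \<in> carrier A \<Longrightarrow> y \<in> carrier A \<Longrightarrow> f (x \<ominus>\<^bsub>A\<^esub> y) = f x \<ominus>\<^bsub>B\<^esub> f y"
  by (rule add_minus_hom[OF lm_ag lm_ag]) (auto dest: lin_mapD)

lemma lin_comp: "lin_map R A B f \<Longrightarrow> lin_map R B C g \<Longrightarrow> lin_map R A C (\<lambda>x. g (f x))"
  unfolding lin_map_def by (auto simp: Pi_iff)

lemma ag_diff_add: "abelian_group M \<Longrightarrow> a \<in> carrier M \<Longrightarrow> b \<in> carrier M \<Longrightarrow> c \<in> carrier M \<Longrightarrow> d \<in> carrier M \<Longrightarrow>
  (a \<oplus>\<^bsub>M\<^esub> b) \<ominus>\<^bsub>M\<^esub> (c \<oplus>\<^bsub>M\<^esub> d) = (a \<ominus>\<^bsub>M\<^esub> c) \<oplus>\<^bsub>M\<^esub> (b \<ominus>\<^bsub>M\<^esub> d)"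
proof -
  assume M: "abelian_group M" and abcd: "a \<in> carrier M" "b \<in> carrier M" "c \<in> carrier M" "d \<in> carrier M"
  interpret abelian_group M by (rule M)
  show ?thesis using abcd by (simp add: minus_eq minus_add a_ac)
qed

lemma lin_map_diff: "lin_map R A B f \<Longrightarrow> lin_map R A B g \<Longrightarrow> left_module R B \<Longrightarrow>
   lin_map R A B (\<lambda>x. f x \<ominus>\<^bsub>B\<^esub> g x)"
  apply (rule lin_mapI)
    apply (simp add: abelian_group.minus_closed lm_ag lin_mapD)
   apply (simp add: lin_mapD ag_diff_add lm_ag)
  apply (simp add: lin_mapD lm_smult_diff)
  done

lemma lin_map_zero: "left_module R B \<Longrightarrow> lin_map R A B (\<lambda>x. \<zero>\<^bsub>B\<^esub>)"
  by (rule lin_mapI) (auto simp: lm_smult_zero ag_zero_closed lm_ag ag_r_zero)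

lemma ag_diff_zero: "abelian_group M \<Longrightarrow> x \<in> carrier M \<Longrightarrow> y \<in> carrier M \<Longrightarrow> (x \<ominus>\<^bsub>M\<^esub> y = \<zero>\<^bsub>M\<^esub>) = (x = y)"
  by (metis abelian_group.minus_eq abelian_group.r_neg abelian_group.a_inv_closed
      abelian_group.minus_equality abelian_group.minus_minus)

lemma ag_diff_self_zero: "abelian_group M \<Longrightarrow> x \<in> carrier M \<Longrightarrow> x \<ominus>\<^bsub>M\<^esub> \<zero>\<^bsub>M\<^esub> = x"
proof -
  assume M: "abelian_group M" and x: "x \<in> carrier M"
  interpret abelian_group M by (rule M)
  show ?thesis using x by (simp add: minus_eq)
qed

lemma ring_mod_simps [simp]:
  "carrier (ring_mod R) = carrier R" "zero (ring_mod R) = \<zero>\<^bsub>R\<^esub>"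
  "add (ring_mod R) = add R" "smult (ring_mod R) = monoid.mult R"
  by (simp_all add: ring_mod_def)

lemma pow_mod_simps [simp]:
  "carrier (pow_mod M n) = {f. (\<forall>i<n. f i \<in> carrier M) \<and> (\<forall>i\<ge>n. f i = \<zero>\<^bsub>M\<^esub>)}"
  "zero (pow_mod M n) = (\<lambda>i. \<zero>\<^bsub>M\<^esub>)"
  "add (pow_mod M n) = (\<lambda>f g i. f i \<oplus>\<^bsub>M\<^esub> g i)"
  "smult (pow_mod M n) = (\<lambda>r f i. r \<odot>\<^bsub>M\<^esub> f i)"
  by (simp_all add: pow_mod_def)

lemma dsum_simps [simp]:
  "carrier (dsum M N) = carrier M \<times> carrier N"
  "zero (dsum M N) = (\<zero>\<^bsub>M\<^esub>, \<zero>\<^bsub>N\<^esub>)"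
  "add (dsum M N) = (\<lambda>p q. (fst p \<oplus>\<^bsub>M\<^esub> fst q, snd p \<oplus>\<^bsub>N\<^esub> snd q))"
  "smult (dsum M N) = (\<lambda>r p. (r \<odot>\<^bsub>M\<^esub> fst p, r \<odot>\<^bsub>N\<^esub> snd p))"
  by (simp_all add: dsum_def)

lemma ring_mod_lm: "ring R \<Longrightarrow> left_module R (ring_mod R)"
proof -
  assume R: "ring R"
  interpret ring R by (rule R)
  have ag: "abelian_group (ring_mod R)"
    by (rule abelian_groupI) (auto simp: a_ac intro: l_neg)
  show ?thesis unfolding left_module_def module_axioms_def
    using R ag by (auto simp: l_distr r_distr m_assoc)
qed

lemma pow_mod_lm: "left_module R M \<Longrightarrow> left_module R (pow_mod M n)"
proof -
  assume M: "left_module R M"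
  interpret abelian_group M using lm_ag[OF M] .
  have all: "\<And>x i. \<forall>i<n. x i \<in> carrier M \<Longrightarrow> \<forall>i\<ge>n. x i = \<zero>\<^bsub>M\<^esub> \<Longrightarrow> x i \<in> carrier M"
    by (metis not_le zero_closed)
  have ag: "abelian_group (pow_mod M n)"
  proof (rule abelian_groupI, goal_cases)
    case (6 x)
    then show ?case
    proof (intro bexI[of _ "\<lambda>i. \<ominus>\<^bsub>M\<^esub> x i"])
      show "(\<lambda>i. \<ominus>\<^bsub>M\<^esub> x i) \<oplus>\<^bsub>pow_mod M n\<^esub> x = \<zero>\<^bsub>pow_mod M n\<^esub>"
      proof (simp, rule ext)
        fix i show "\<ominus>\<^bsub>M\<^esub> x i \<oplus>\<^bsub>M\<^esub> x i = \<zero>\<^bsub>M\<^esub>"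
          using 6 by (cases "i < n") (auto simp: l_neg)
      qed
    qed (use 6 in auto)
  qed (auto intro!: ext simp: a_ac all)
  have mx: "module_axioms R (pow_mod M n)"
    unfolding module_axioms_def
    using M by (auto intro!: ext simp: lm_closed lm_ldistr lm_rdistr lm_assoc lm_one lm_smult_zero all)
  show ?thesis using ag mx lm_ring[OF M] by (simp add: left_module_def)
qed

lemma free_mod_lm: "ring R \<Longrightarrow> left_module R (free_mod R n)"
  by (simp add: free_mod_def pow_mod_lm ring_mod_lm)

lemma free_mod_simps [simp]:
  "carrier (free_mod R n) = {f. (\<forall>i<n. f i \<in> carrier R) \<and> (\<forall>i\<ge>n. f i = \<zero>\<^bsub>R\<^esub>)}"
  "zero (free_mod R n) = (\<lambda>i. \<zero>\<^bsub>R\<^esub>)"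
  "add (free_mod R n) = (\<lambda>f g i. f i \<oplus>\<^bsub>R\<^esub> g i)"
  "smult (free_mod R n) = (\<lambda>r f i. r \<otimes>\<^bsub>R\<^esub> f i)"
  by (simp_all add: free_mod_def)

primrec msum :: "('a, 'c) ring_scheme \<Rightarrow> (nat \<Rightarrow> 'a) \<Rightarrow> nat \<Rightarrow> 'a" where
  "msum M a 0 = \<zero>\<^bsub>M\<^esub>"
| "msum M a (Suc k) = msum M a k \<oplus>\<^bsub>M\<^esub> a k"

lemma msum_closed: "abelian_group M \<Longrightarrow> (\<And>i. i < k \<Longrightarrow> a i \<in> carrier M) \<Longrightarrow> msum M a k \<in> carrier M"
  by (induction k) (auto simp: ag_zero_closed ag_add_closed)

lemma msum_in: "zz \<in> S \<Longrightarrow> \<zero>\<^bsub>M\<^esub> = zz \<Longrightarrow> (\<And>x y. x \<in> S \<Longrightarrow> y \<in> S \<Longrightarrow> x \<oplus>\<^bsub>M\<^esub> y \<in> S) \<Longrightarrow>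
   (\<And>i. i < k \<Longrightarrow> a i \<in> S) \<Longrightarrow> msum M a k \<in> S"
  by (induction k) auto

lemma msum_cong: "(\<And>i. i < k \<Longrightarrow> a i = b i) \<Longrightarrow> msum M a k = msum M b k"
  by (induction k) auto

lemma msum_add: "abelian_group M \<Longrightarrow> (\<And>i. i < k \<Longrightarrow> a i \<in> carrier M) \<Longrightarrow> (\<And>i. i < k \<Longrightarrow> b i \<in> carrier M) \<Longrightarrow>
   msum M (\<lambda>i. a i \<oplus>\<^bsub>M\<^esub> b i) k = msum M a k \<oplus>\<^bsub>M\<^esub> msum M b k"
proof (induction k)
  case 0
  then show ?case by (simp add: ag_r_zero ag_zero_closed)
next
  case (Suc k)
  interpret abelian_group M by (rule Suc.prems(1))
  have ca: "msum M a k \<in> carrier M" and cb: "msum M b k \<in> carrier M"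
    using Suc.prems by (auto intro!: msum_closed)
  show ?case using Suc ca cb by (simp add: a_ac)
qed

lemma msum_hom:
  assumes A: "abelian_group A" and B: "abelian_group B"
    and S: "S \<subseteq> carrier A" "\<zero>\<^bsub>A\<^esub> \<in> S" "\<And>x y. x \<in> S \<Longrightarrow> y \<in> S \<Longrightarrow> x \<oplus>\<^bsub>A\<^esub> y \<in> S"
    and g: "\<And>x. x \<in> S \<Longrightarrow> g x \<in> carrier B"
      "\<And>x y. x \<in> S \<Longrightarrow> y \<in> S \<Longrightarrow> g (x \<oplus>\<^bsub>A\<^esub> y) = g x \<oplus>\<^bsub>B\<^esub> g y"
    and a: "\<And>i. i < k \<Longrightarrow> a i \<in> S"
  shows "g (msum A a k) = msum B (\<lambda>i. g (a i)) k"
  using a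
proof (induction k)
  case 0
  have "g \<zero>\<^bsub>A\<^esub> \<oplus>\<^bsub>B\<^esub> g \<zero>\<^bsub>A\<^esub> = g \<zero>\<^bsub>A\<^esub>"
    using g(2)[OF S(2) S(2)] ag_r_zero[OF A] S by auto
  then show ?case using ag_cancel_self[OF B] g(1)[OF S(2)] by simp
next
  case (Suc k)
  have "msum A a k \<in> S" by (rule msum_in[OF S(2) refl S(3)]) (use Suc in auto)
  then show ?case using Suc g by simp
qed

lemma msum_smult: "left_module R M \<Longrightarrow> r \<in> carrier R \<Longrightarrow> (\<And>i. i < k \<Longrightarrow> a i \<in> carrier M) \<Longrightarrow>
   r \<odot>\<^bsub>M\<^esub> msum M a k = msum M (\<lambda>i. r \<odot>\<^bsub>M\<^esub> a i) k"
proof (induction k)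
  case 0
  then show ?case by (simp add: lm_smult_zero)
next
  case (Suc k)
  then show ?case by (simp add: lm_rdistr msum_closed lm_ag)
qed

definition unitv :: "'r ring \<Rightarrow> nat \<Rightarrow> nat \<Rightarrow> 'r" where
  "unitv R k = (\<lambda>i. if i = k then \<one>\<^bsub>R\<^esub> else \<zero>\<^bsub>R\<^esub>)"

lemma unitv_carrier: "ring R \<Longrightarrow> k < n \<Longrightarrow> unitv R k \<in> carrier (free_mod R n)"
  by (auto simp: unitv_def ring.ring_simprules)

lemma free_expand:
  assumes R: "ring R" and B: "left_module R B" and f: "lin_map R (free_mod R n) B f"
    and x: "x \<in> carrier (free_mod R n)"
  shows "f x = msum B (\<lambda>i. x i \<odot>\<^bsub>B\<^esub> f (unitv R i)) n"
proof -
  interpret ring R by (rule R)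
  define tr where "tr k = (\<lambda>i. if i < k then x i else \<zero>\<^bsub>R\<^esub>)" for k
  have trc: "tr k \<in> carrier (free_mod R n)" for k
    using x by (auto simp: tr_def)
  have "k \<le> n \<Longrightarrow> f (tr k) = msum B (\<lambda>i. x i \<odot>\<^bsub>B\<^esub> f (unitv R i)) k" for k
  proof (induction k)
    case 0
    have "tr 0 = \<zero>\<^bsub>free_mod R n\<^esub>" by (simp add: tr_def)
    then show ?case using lin_zero[OF f free_mod_lm[OF R] B] by simp
  next
    case (Suc k)
    have xk: "x k \<in> carrier R" using x Suc.prems by auto
    have eq: "tr (Suc k) = tr k \<oplus>\<^bsub>free_mod R n\<^esub> (x k \<odot>\<^bsub>free_mod R n\<^esub> unitv R k)"
    proof (simp, rule ext)
      fix i
      show "tr (Suc k) i = tr k i \<oplus>\<^bsub>R\<^esub> x k \<otimes>\<^bsub>R\<^esub> unitv R k i"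
        using x xk Suc.prems by (cases "i < k"; cases "i = k") (auto simp: tr_def unitv_def)
    qed
    have uc: "unitv R k \<in> carrier (free_mod R n)" using unitv_carrier[OF R, of k n] Suc.prems by simp
    have c1: "x k \<odot>\<^bsub>free_mod R n\<^esub> unitv R k \<in> carrier (free_mod R n)"
      by (rule lm_closed[OF free_mod_lm[OF R] xk uc])
    have "f (tr (Suc k)) = f (tr k) \<oplus>\<^bsub>B\<^esub> f (x k \<odot>\<^bsub>free_mod R n\<^esub> unitv R k)"
      unfolding eq by (rule lin_mapD(2)[OF f trc c1])
    also have "\<dots> = f (tr k) \<oplus>\<^bsub>B\<^esub> x k \<odot>\<^bsub>B\<^esub> f (unitv R k)"
      by (simp only: lin_mapD(3)[OF f xk uc])
    finally have "f (tr (Suc k)) = f (tr k) \<oplus>\<^bsub>B\<^esub> x k \<odot>\<^bsub>B\<^esub> f (unitv R k)" .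
    then show ?case using Suc by simp
  qed
  moreover have "tr n = x" using x by (auto simp: tr_def)
  ultimately show ?thesis by auto
qed

lemma free_lift:
  assumes R: "ring R" and A: "left_module R A" and B: "left_module R B"
    and S: "S \<subseteq> carrier A" "\<zero>\<^bsub>A\<^esub> \<in> S" "\<And>x y. x \<in> S \<Longrightarrow> y \<in> S \<Longrightarrow> x \<oplus>\<^bsub>A\<^esub> y \<in> S"
      "\<And>r x. r \<in> carrier R \<Longrightarrow> x \<in> S \<Longrightarrow> r \<odot>\<^bsub>A\<^esub> x \<in> S"
    and g: "\<And>x. x \<in> S \<Longrightarrow> g x \<in> carrier B"
      "\<And>x y. x \<in> S \<Longrightarrow> y \<in> S \<Longrightarrow> g (x \<oplus>\<^bsub>A\<^esub> y) = g x \<oplus>\<^bsub>B\<^esub> g y"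
      "\<And>r x. r \<in> carrier R \<Longrightarrow> x \<in> S \<Longrightarrow> g (r \<odot>\<^bsub>A\<^esub> x) = r \<odot>\<^bsub>B\<^esub> g x"
    and f: "lin_map R (free_mod R n) B f"
    and surj: "\<And>x. x \<in> carrier (free_mod R n) \<Longrightarrow> \<exists>y\<in>S. g y = f x"
  shows "\<exists>h. lin_map R (free_mod R n) A h \<and> (\<forall>x\<in>carrier (free_mod R n). h x \<in> S \<and> g (h x) = f x)"
proof -
  interpret ring R by (rule R)
  have "\<forall>i. \<exists>y. i < n \<longrightarrow> y \<in> S \<and> g y = f (unitv R i)"
    using surj unitv_carrier[OF R] by blast
  then obtain a where a: "\<And>i. i < n \<Longrightarrow> a i \<in> S \<and> g (a i) = f (unitv R i)" by metis
  have aA: "i < n \<Longrightarrow> a i \<in> carrier A" for i using a S(1) by blast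
  define h where "h x = msum A (\<lambda>i. x i \<odot>\<^bsub>A\<^esub> a i) n" for x
  have hS: "h x \<in> S" if x: "x \<in> carrier (free_mod R n)" for x
    unfolding h_def by (rule msum_in[OF S(2) refl S(3)]) (use a x S(4) in auto)
  have lin: "lin_map R (free_mod R n) A h"
  proof (rule lin_mapI)
    fix x assume "x \<in> carrier (free_mod R n)"
    then show "h x \<in> carrier A" using hS S(1) by blast
  next
    fix x y assume x: "x \<in> carrier (free_mod R n)" and y: "y \<in> carrier (free_mod R n)"
    have "h (x \<oplus>\<^bsub>free_mod R n\<^esub> y) = msum A (\<lambda>i. x i \<odot>\<^bsub>A\<^esub> a i \<oplus>\<^bsub>A\<^esub> y i \<odot>\<^bsub>A\<^esub> a i) n"
      unfolding h_def by (rule msum_cong) (use x y aA in \<open>auto simp: lm_ldistr[OF A]\<close>)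
    also have "\<dots> = h x \<oplus>\<^bsub>A\<^esub> h y"
      unfolding h_def by (rule msum_add[OF lm_ag[OF A]]) (use x y aA in \<open>auto simp: lm_closed[OF A]\<close>)
    finally show "h (x \<oplus>\<^bsub>free_mod R n\<^esub> y) = h x \<oplus>\<^bsub>A\<^esub> h y" .
  next
    fix r x assume r: "r \<in> carrier R" and x: "x \<in> carrier (free_mod R n)"
    have "h (r \<odot>\<^bsub>free_mod R n\<^esub> x) = msum A (\<lambda>i. r \<odot>\<^bsub>A\<^esub> (x i \<odot>\<^bsub>A\<^esub> a i)) n"
      unfolding h_def by (rule msum_cong) (use r x aA in \<open>auto simp: lm_assoc[OF A]\<close>)
    also have "\<dots> = r \<odot>\<^bsub>A\<^esub> h x"
      unfolding h_def by (rule msum_smult[OF A r, symmetric]) (use x aA in \<open>auto simp: lm_closed[OF A]\<close>)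
    finally show "h (r \<odot>\<^bsub>free_mod R n\<^esub> x) = r \<odot>\<^bsub>A\<^esub> h x" .
  qed
  have "g (h x) = f x" if x: "x \<in> carrier (free_mod R n)" for x
  proof -
    have "g (h x) = msum B (\<lambda>i. g (x i \<odot>\<^bsub>A\<^esub> a i)) n"
      unfolding h_def by (rule msum_hom[OF lm_ag[OF A] lm_ag[OF B] S(1,2,3) g(1,2)]) (use a x S(4) in auto)
    also have "\<dots> = msum B (\<lambda>i. x i \<odot>\<^bsub>B\<^esub> f (unitv R i)) n"
      by (rule msum_cong) (use a x g(3) in auto)
    also have "\<dots> = f x" using free_expand[OF R B f x] by simp
    finally show ?thesis .
  qed
  then show ?thesis using lin hS by blast
qed

lemma projectiveD:
  assumes "projective R P"
  obtains n s p where "lin_map R P (free_mod R n) s" "lin_map R (free_mod R n) P p"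
    "\<And>x. x \<in> carrier P \<Longrightarrow> p (s x) = x"
  using assms unfolding projective_def by blast

lemma projective_lm: "projective R P \<Longrightarrow> left_module R P"
  by (simp add: projective_def fin_pres_def)

lemma proj_lift:
  assumes P: "projective R P" and A: "left_module R A" and B: "left_module R B"
    and S: "S \<subseteq> carrier A" "\<zero>\<^bsub>A\<^esub> \<in> S" "\<And>x y. x \<in> S \<Longrightarrow> y \<in> S \<Longrightarrow> x \<oplus>\<^bsub>A\<^esub> y \<in> S"
      "\<And>r x. r \<in> carrier R \<Longrightarrow> x \<in> S \<Longrightarrow> r \<odot>\<^bsub>A\<^esub> x \<in> S"
    and g: "\<And>x. x \<in> S \<Longrightarrow> g x \<in> carrier B"
      "\<And>x y. x \<in> S \<Longrightarrow> y \<in> S \<Longrightarrow> g (x \<oplus>\<^bsub>A\<^esub> y) = g x \<oplus>\<^bsub>B\<^esub> g y"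
      "\<And>r x. r \<in> carrier R \<Longrightarrow> x \<in> S \<Longrightarrow> g (r \<odot>\<^bsub>A\<^esub> x) = r \<odot>\<^bsub>B\<^esub> g x"
    and f: "lin_map R P B f"
    and surj: "\<And>x. x \<in> carrier P \<Longrightarrow> \<exists>y\<in>S. g y = f x"
  shows "\<exists>h. lin_map R P A h \<and> (\<forall>x\<in>carrier P. h x \<in> S \<and> g (h x) = f x)"
proof -
  obtain n s p where s: "lin_map R P (free_mod R n) s" and p: "lin_map R (free_mod R n) P p"
    and ps: "\<And>x. x \<in> carrier P \<Longrightarrow> p (s x) = x" using projectiveD[OF P] by blast
  have R: "ring R" using lm_ring[OF A] .
  have fp: "lin_map R (free_mod R n) B (\<lambda>x. f (p x))" using lin_comp[OF p f] .
  obtain h where h: "lin_map R (free_mod R n) A h"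
    "\<And>x. x \<in> carrier (free_mod R n) \<Longrightarrow> h x \<in> S \<and> g (h x) = f (p x)"
    using free_lift[OF R A B S g fp] surj lin_mapD(1)[OF p] by blast
  show ?thesis
    apply (rule exI[of _ "\<lambda>x. h (s x)"])
    using lin_comp[OF s h(1)] h(2) lin_mapD(1)[OF s] ps by auto
qed

lemma ext_retract:
  assumes ext: "ext_vanish_pos R Q e N"
    and i: "lin_map R N' N i" "i \<zero>\<^bsub>N'\<^esub> = \<zero>\<^bsub>N\<^esub>"
    and r: "lin_map R N N' r" and ri: "\<And>y. y \<in> carrier N' \<Longrightarrow> r (i y) = y"
  shows "ext_vanish_pos R Q e N'"
  unfolding ext_vanish_pos_def
proof (intro allI impI)
  fix n \<phi> assume n: "1 \<le> n" and h: "lin_map R (Q n) N' \<phi> \<and>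
        (\<forall>x\<in>carrier (Q (n + 1)). \<phi> (e (n + 1) x) = \<zero>\<^bsub>N'\<^esub>)"
  have "lin_map R (Q n) N (\<lambda>x. i (\<phi> x)) \<and> (\<forall>x\<in>carrier (Q (n + 1)). i (\<phi> (e (n + 1) x)) = \<zero>\<^bsub>N\<^esub>)"
    using h lin_comp[OF _ i(1)] i(2) by auto
  then obtain \<psi> where \<psi>: "lin_map R (Q (n - 1)) N \<psi>" "\<forall>x\<in>carrier (Q n). i (\<phi> x) = \<psi> (e n x)"
    using ext n unfolding ext_vanish_pos_def by blast
  show "\<exists>\<psi>. lin_map R (Q (n - 1)) N' \<psi> \<and> (\<forall>x\<in>carrier (Q n). \<phi> x = \<psi> (e n x))"
    apply (rule exI[of _ "\<lambda>x. r (\<psi> x)"])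
    using lin_comp[OF \<psi>(1) r] \<psi>(2) ri lin_mapD(1) h by metis
qed

lemma ext_pow:
  assumes N: "left_module R N" and ext: "ext_vanish_pos R Q e N"
  shows "ext_vanish_pos R Q e (pow_mod N m)"
  unfolding ext_vanish_pos_def
proof (intro allI impI)
  fix n \<phi> assume n: "1 \<le> n" and h: "lin_map R (Q n) (pow_mod N m) \<phi> \<and>
        (\<forall>x\<in>carrier (Q (n + 1)). \<phi> (e (n + 1) x) = \<zero>\<^bsub>pow_mod N m\<^esub>)"
  have "\<forall>j\<in>{..<m}. \<exists>\<psi>. lin_map R (Q (n - 1)) N \<psi> \<and> (\<forall>x\<in>carrier (Q n). \<phi> x j = \<psi> (e n x))"
  proof
    fix j assume "j \<in> {..<m}" then have j: "j < m" by simp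
    have "lin_map R (Q n) N (\<lambda>x. \<phi> x j)"
      using h j by (auto simp: lin_map_def Pi_iff)
    moreover have "\<forall>x\<in>carrier (Q (n + 1)). \<phi> (e (n + 1) x) j = \<zero>\<^bsub>N\<^esub>"
      using h by simp
    ultimately show "\<exists>\<psi>. lin_map R (Q (n - 1)) N \<psi> \<and> (\<forall>x\<in>carrier (Q n). \<phi> x j = \<psi> (e n x))"
      using ext n unfolding ext_vanish_pos_def by blast
  qed
  then obtain \<psi> where \<psi>: "\<And>j. j < m \<Longrightarrow> lin_map R (Q (n - 1)) N (\<psi> j) \<and>
      (\<forall>x\<in>carrier (Q n). \<phi> x j = \<psi> j (e n x))" by (metis bchoice lessThan_iff)
  define \<Psi> where "\<Psi> x = (\<lambda>j. if j < m then \<psi> j x else \<zero>\<^bsub>N\<^esub>)" for x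
  have lin: "lin_map R (Q (n - 1)) (pow_mod N m) \<Psi>"
  proof (rule lin_mapI)
    fix x assume "x \<in> carrier (Q (n - 1))"
    then show "\<Psi> x \<in> carrier (pow_mod N m)" using \<psi> by (auto simp: \<Psi>_def lin_map_def Pi_iff)
  next
    fix x y assume "x \<in> carrier (Q (n - 1))" "y \<in> carrier (Q (n - 1))"
    then show "\<Psi> (x \<oplus>\<^bsub>Q (n - 1)\<^esub> y) = \<Psi> x \<oplus>\<^bsub>pow_mod N m\<^esub> \<Psi> y"
      using \<psi> by (auto intro!: ext simp: \<Psi>_def lin_map_def ag_r_zero ag_zero_closed lm_ag[OF N])
  next
    fix r x assume "r \<in> carrier R" "x \<in> carrier (Q (n - 1))"
    then show "\<Psi> (r \<odot>\<^bsub>Q (n - 1)\<^esub> x) = r \<odot>\<^bsub>pow_mod N m\<^esub> \<Psi> x"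
      using \<psi> by (auto intro!: ext simp: \<Psi>_def lin_map_def lm_smult_zero[OF N])
  qed
  have "\<forall>x\<in>carrier (Q n). \<phi> x = \<Psi> (e n x)"
  proof
    fix x assume x: "x \<in> carrier (Q n)"
    have "\<phi> x \<in> carrier (pow_mod N m)" using h x by (auto simp: lin_map_def)
    then show "\<phi> x = \<Psi> (e n x)"
      using \<psi> x by (auto intro!: ext simp: \<Psi>_def)
  qed
  then show "\<exists>\<psi>. lin_map R (Q (n - 1)) (pow_mod N m) \<psi> \<and> (\<forall>x\<in>carrier (Q n). \<phi> x = \<psi> (e n x))"
    using lin by blast
qed

lemma ext_dsum_left:
  assumes M: "left_module R M" and ext: "ext_vanish_pos R Q e (dsum M (ring_mod R))"
  shows "ext_vanish_pos R Q e M"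
proof (rule ext_retract[OF ext, where i="\<lambda>m. (m, \<zero>\<^bsub>R\<^esub>)" and r=fst])
  interpret ring R using lm_ring[OF M] .
  show "lin_map R M (dsum M (ring_mod R)) (\<lambda>m. (m, \<zero>\<^bsub>R\<^esub>))"
    by (rule lin_mapI) auto
  show "lin_map R (dsum M (ring_mod R)) M fst"
    by (rule lin_mapI) auto
qed auto

lemma ext_dsum_right:
  assumes M: "left_module R M" and ext: "ext_vanish_pos R Q e (dsum M (ring_mod R))"
  shows "ext_vanish_pos R Q e (ring_mod R)"
proof (rule ext_retract[OF ext, where i="\<lambda>m. (\<zero>\<^bsub>M\<^esub>, m)" and r=snd])
  show "lin_map R (ring_mod R) (dsum M (ring_mod R)) (\<lambda>m. (\<zero>\<^bsub>M\<^esub>, m))"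
    by (rule lin_mapI) (auto simp: ag_zero_closed[OF lm_ag[OF M]] ag_r_zero[OF lm_ag[OF M]] lm_smult_zero[OF M])
  show "lin_map R (dsum M (ring_mod R)) (ring_mod R) snd"
    by (rule lin_mapI) auto
qed auto

lemma ext_proj:
  assumes R: "ring R" and extR: "ext_vanish_pos R Q e (ring_mod R)" and P: "projective R P"
  shows "ext_vanish_pos R Q e P"
proof -
  obtain n s p where s: "lin_map R P (free_mod R n) s" and p: "lin_map R (free_mod R n) P p"
    and ps: "\<And>x. x \<in> carrier P \<Longrightarrow> p (s x) = x" using projectiveD[OF P] by blast
  have "ext_vanish_pos R Q e (free_mod R n)"
    unfolding free_mod_def by (rule ext_pow[OF ring_mod_lm[OF R] extR])
  then show ?thesis
    by (rule ext_retract[where i=s and r=p]) (use s p ps lin_zero[OF s projective_lm[OF P] free_mod_lm[OF R]] in auto)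
qed

lemma cx_lm: "is_complex R X d \<Longrightarrow> left_module R (X i)"
  by (simp add: is_complex_def)
lemma cx_lin: "is_complex R X d \<Longrightarrow> lin_map R (X i) (X (i - 1)) (d i)"
  by (simp add: is_complex_def)
lemma cx_lin': "is_complex R X d \<Longrightarrow> lin_map R (X (i + 1)) (X i) (d (i + 1))"
  using cx_lin[of R X d "i + 1"] by simp
lemma cx_dd: "is_complex R X d \<Longrightarrow> x \<in> carrier (X (i + 1)) \<Longrightarrow> d i (d (i + 1) x) = \<zero>\<^bsub>X (i - 1)\<^esub>"
proof -
  assume c: "is_complex R X d" and x: "x \<in> carrier (X (i + 1))"
  have "d (i + 1 - 1) (d (i + 1) x) = \<zero>\<^bsub>X (i + 1 - 2)\<^esub>" using c x unfolding is_complex_def by blast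
  moreover have "i + 1 - 2 = i - 1" by simp
  ultimately show ?thesis by simp
qed

definition coset :: "('r, 'b) module \<Rightarrow> 'b set \<Rightarrow> 'b \<Rightarrow> 'b set" where
  "coset A B z = {z \<oplus>\<^bsub>A\<^esub> b | b. b \<in> B}"

lemma homology_simps:
  "carrier (homology X d j) = coset (X j) (boundaries X d j) ` cycles X d j"
  "zero (homology X d j) = boundaries X d j"
  "add (homology X d j) = (\<lambda>U V. {u \<oplus>\<^bsub>X j\<^esub> v | u v. u \<in> U \<and> v \<in> V})"
  "smult (homology X d j) = (\<lambda>r U. {(r \<odot>\<^bsub>X j\<^esub> u) \<oplus>\<^bsub>X j\<^esub> b | u b. u \<in> U \<and> b \<in> boundaries X d j})"
  by (simp_all add: homology_def Let_def coset_def[abs_def])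

locale cplx =
  fixes R :: "'r ring" and X :: "int \<Rightarrow> ('r, 'b) module" and d :: "int \<Rightarrow> 'b \<Rightarrow> 'b"
  assumes cx: "is_complex R X d"
begin

abbreviation "Bd j \<equiv> boundaries X d j"
abbreviation "Zc j \<equiv> cycles X d j"

lemma lm: "left_module R (X i)" using cx_lm[OF cx] .
lemma ag: "abelian_group (X i)" using lm_ag[OF lm] .
lemma ringR: "ring R" using lm_ring[OF lm] .

lemma d_lin: "lin_map R (X (i + 1)) (X i) (d (i + 1))" using cx_lin'[OF cx] .
lemma d_lin0: "lin_map R (X i) (X (i - 1)) (d i)" using cx_lin[OF cx] .
lemma d_closed: "x \<in> carrier (X (i + 1)) \<Longrightarrow> d (i + 1) x \<in> carrier (X i)"
  using lin_mapD(1)[OF d_lin] .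
lemma d_closed0: "x \<in> carrier (X i) \<Longrightarrow> d i x \<in> carrier (X (i - 1))"
  using lin_mapD(1)[OF d_lin0] .
lemma d_zero: "d i \<zero>\<^bsub>X i\<^esub> = \<zero>\<^bsub>X (i - 1)\<^esub>"
  using lin_zero[OF d_lin0 lm lm] .
lemma d_zero': "d (i + 1) \<zero>\<^bsub>X (i + 1)\<^esub> = \<zero>\<^bsub>X i\<^esub>"
  using d_zero[of "i + 1"] by simp
lemma d_dd: "x \<in> carrier (X (i + 1)) \<Longrightarrow> d i (d (i + 1) x) = \<zero>\<^bsub>X (i - 1)\<^esub>"
  using cx_dd[OF cx] .

lemma B_sub: "Bd j \<subseteq> carrier (X j)"
  unfolding boundaries_def using d_closed by blast
lemma B_zero: "\<zero>\<^bsub>X j\<^esub> \<in> Bd j"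
proof -
  have "d (j + 1) \<zero>\<^bsub>X (j + 1)\<^esub> \<in> Bd j" unfolding boundaries_def using ag_zero_closed[OF ag] by blast
  then show ?thesis using d_zero' by simp
qed
lemma B_add: "x \<in> Bd j \<Longrightarrow> y \<in> Bd j \<Longrightarrow> x \<oplus>\<^bsub>X j\<^esub> y \<in> Bd j"
proof -
  assume "x \<in> Bd j" "y \<in> Bd j"
  then obtain a b where ab: "a \<in> carrier (X (j + 1))" "b \<in> carrier (X (j + 1))" "x = d (j + 1) a" "y = d (j + 1) b"
    unfolding boundaries_def by blast
  then have "x \<oplus>\<^bsub>X j\<^esub> y = d (j + 1) (a \<oplus>\<^bsub>X (j + 1)\<^esub> b)" using lin_mapD(2)[OF d_lin] by simp
  then show ?thesis unfolding boundaries_def using ab ag_add_closed[OF ag] by blast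
qed
lemma B_smult: "r \<in> carrier R \<Longrightarrow> x \<in> Bd j \<Longrightarrow> r \<odot>\<^bsub>X j\<^esub> x \<in> Bd j"
proof -
  assume r: "r \<in> carrier R" and "x \<in> Bd j"
  then obtain a where a: "a \<in> carrier (X (j + 1))" "x = d (j + 1) a"
    unfolding boundaries_def by blast
  then have "r \<odot>\<^bsub>X j\<^esub> x = d (j + 1) (r \<odot>\<^bsub>X (j + 1)\<^esub> a)" using lin_mapD(3)[OF d_lin] r by simp
  then show ?thesis unfolding boundaries_def using a r lm_closed[OF lm] by blast
qed
lemma B_neg: "x \<in> Bd j \<Longrightarrow> \<ominus>\<^bsub>X j\<^esub> x \<in> Bd j"
proof -
  assume "x \<in> Bd j"
  then obtain y where y: "y \<in> carrier (X (j + 1))" "x = d (j + 1) y" unfolding boundaries_def by blast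
  interpret abelian_group "X (j + 1)" by (rule ag)
  have zm: "\<And>i u. u \<in> carrier (X i) \<Longrightarrow> \<zero>\<^bsub>X i\<^esub> \<ominus>\<^bsub>X i\<^esub> u = \<ominus>\<^bsub>X i\<^esub> u"
    by (simp add: abelian_group.minus_eq[OF ag] ag_l_zero[OF ag] abelian_group.a_inv_closed[OF ag])
  have "d (j + 1) (\<zero>\<^bsub>X (j + 1)\<^esub> \<ominus>\<^bsub>X (j + 1)\<^esub> y) = d (j + 1) \<zero>\<^bsub>X (j + 1)\<^esub> \<ominus>\<^bsub>X j\<^esub> d (j + 1) y"
    by (rule lin_diff[OF d_lin lm lm]) (use y ag_zero_closed[OF ag] in auto)
  then have "\<ominus>\<^bsub>X j\<^esub> x = d (j + 1) (\<ominus>\<^bsub>X (j + 1)\<^esub> y)"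
    using zm y d_zero' d_closed by simp
  then show ?thesis unfolding boundaries_def using y by blast
qed
lemma B_diff: "x \<in> Bd j \<Longrightarrow> y \<in> Bd j \<Longrightarrow> x \<ominus>\<^bsub>X j\<^esub> y \<in> Bd j"
  by (simp add: abelian_group.minus_eq[OF ag] B_add B_neg)

lemma Z_sub: "Zc j \<subseteq> carrier (X j)" unfolding cycles_def by blast
lemma B_Z: "Bd j \<subseteq> Zc j"
proof
  fix x assume "x \<in> Bd j"
  then obtain y where y: "y \<in> carrier (X (j + 1))" "x = d (j + 1) y" unfolding boundaries_def by blast
  then show "x \<in> Zc j" unfolding cycles_def using d_closed d_dd by auto
qed
lemma Z_zero: "\<zero>\<^bsub>X j\<^esub> \<in> Zc j"
  unfolding cycles_def using d_zero ag_zero_closed[OF ag] by auto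
lemma Z_add: "x \<in> Zc j \<Longrightarrow> y \<in> Zc j \<Longrightarrow> x \<oplus>\<^bsub>X j\<^esub> y \<in> Zc j"
  unfolding cycles_def using lin_mapD(2)[OF d_lin0] ag_add_closed[OF ag] ag_r_zero[OF ag] ag_zero_closed[OF ag] by auto
lemma Z_smult: "r \<in> carrier R \<Longrightarrow> x \<in> Zc j \<Longrightarrow> r \<odot>\<^bsub>X j\<^esub> x \<in> Zc j"
  unfolding cycles_def using lin_mapD(3)[OF d_lin0] lm_closed[OF lm] lm_smult_zero[OF lm] by auto
lemma Z_diff: "x \<in> Zc j \<Longrightarrow> y \<in> Zc j \<Longrightarrow> x \<ominus>\<^bsub>X j\<^esub> y \<in> Zc j"
proof -
  assume "x \<in> Zc j" "y \<in> Zc j"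
  then have xy: "x \<in> carrier (X j)" "y \<in> carrier (X j)" "d j x = \<zero>\<^bsub>X (j - 1)\<^esub>" "d j y = \<zero>\<^bsub>X (j - 1)\<^esub>"
    unfolding cycles_def by auto
  then have "d j (x \<ominus>\<^bsub>X j\<^esub> y) = \<zero>\<^bsub>X (j - 1)\<^esub>"
    using lin_diff[OF d_lin0 lm lm] ag_diff_zero[OF ag] ag_zero_closed[OF ag] by simp
  then show ?thesis unfolding cycles_def using xy ag_minus_closed[OF ag] by auto
qed
lemma d_in_B: "y \<in> carrier (X (j + 1)) \<Longrightarrow> d (j + 1) y \<in> Bd j"
  unfolding boundaries_def by blast
lemma d_in_Z: "y \<in> carrier (X j) \<Longrightarrow> d j y \<in> Zc (j - 1)"
proof -
  assume y: "y \<in> carrier (X j)"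
  have "d (j - 1) (d (j - 1 + 1) y) = \<zero>\<^bsub>X (j - 1 - 1)\<^esub>" using d_dd[of y "j - 1"] y by simp
  then show ?thesis unfolding cycles_def using d_closed0 y by simp
qed

lemma coset_add: "z \<in> carrier (X j) \<Longrightarrow> z' \<in> carrier (X j) \<Longrightarrow>
   {u \<oplus>\<^bsub>X j\<^esub> v | u v. u \<in> coset (X j) (Bd j) z \<and> v \<in> coset (X j) (Bd j) z'} = coset (X j) (Bd j) (z \<oplus>\<^bsub>X j\<^esub> z')"
proof -
  assume z: "z \<in> carrier (X j)" and z': "z' \<in> carrier (X j)"
  interpret abelian_group "X j" by (rule ag)
  have Bc: "b \<in> Bd j \<Longrightarrow> b \<in> carrier (X j)" for b using B_sub by blast
  show ?thesis
  proof (intro Set.set_eqI HOL.iffI)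
    fix w assume "w \<in> {u \<oplus>\<^bsub>X j\<^esub> v | u v. u \<in> coset (X j) (Bd j) z \<and> v \<in> coset (X j) (Bd j) z'}"
    then obtain b b' where bb: "b \<in> Bd j" "b' \<in> Bd j" "w = (z \<oplus>\<^bsub>X j\<^esub> b) \<oplus>\<^bsub>X j\<^esub> (z' \<oplus>\<^bsub>X j\<^esub> b')"
      unfolding coset_def by blast
    then have "w = (z \<oplus>\<^bsub>X j\<^esub> z') \<oplus>\<^bsub>X j\<^esub> (b \<oplus>\<^bsub>X j\<^esub> b')" using z z' Bc by (simp add: a_ac)
    then show "w \<in> coset (X j) (Bd j) (z \<oplus>\<^bsub>X j\<^esub> z')" unfolding coset_def using B_add bb by blast
  next
    fix w assume "w \<in> coset (X j) (Bd j) (z \<oplus>\<^bsub>X j\<^esub> z')"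
    then obtain b where b: "b \<in> Bd j" "w = (z \<oplus>\<^bsub>X j\<^esub> z') \<oplus>\<^bsub>X j\<^esub> b" unfolding coset_def by blast
    then have "w = (z \<oplus>\<^bsub>X j\<^esub> b) \<oplus>\<^bsub>X j\<^esub> (z' \<oplus>\<^bsub>X j\<^esub> \<zero>\<^bsub>X j\<^esub>)" using z z' Bc by (simp add: a_ac)
    then show "w \<in> {u \<oplus>\<^bsub>X j\<^esub> v | u v. u \<in> coset (X j) (Bd j) z \<and> v \<in> coset (X j) (Bd j) z'}"
      unfolding coset_def using B_zero b by blast
  qed
qed

lemma coset_smult: "r \<in> carrier R \<Longrightarrow> z \<in> carrier (X j) \<Longrightarrow>
   {(r \<odot>\<^bsub>X j\<^esub> u) \<oplus>\<^bsub>X j\<^esub> b | u b. u \<in> coset (X j) (Bd j) z \<and> b \<in> Bd j} = coset (X j) (Bd j) (r \<odot>\<^bsub>X j\<^esub> z)"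
proof -
  assume r: "r \<in> carrier R" and z: "z \<in> carrier (X j)"
  interpret abelian_group "X j" by (rule ag)
  have Bc: "b \<in> Bd j \<Longrightarrow> b \<in> carrier (X j)" for b using B_sub by blast
  show ?thesis
  proof (intro Set.set_eqI HOL.iffI)
    fix w assume "w \<in> {(r \<odot>\<^bsub>X j\<^esub> u) \<oplus>\<^bsub>X j\<^esub> b | u b. u \<in> coset (X j) (Bd j) z \<and> b \<in> Bd j}"
    then obtain b b' where bb: "b \<in> Bd j" "b' \<in> Bd j" "w = (r \<odot>\<^bsub>X j\<^esub> (z \<oplus>\<^bsub>X j\<^esub> b')) \<oplus>\<^bsub>X j\<^esub> b"
      unfolding coset_def by blast
    then have "w = (r \<odot>\<^bsub>X j\<^esub> z) \<oplus>\<^bsub>X j\<^esub> ((r \<odot>\<^bsub>X j\<^esub> b') \<oplus>\<^bsub>X j\<^esub> b)"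
      using z Bc r by (simp add: lm_rdistr[OF lm] lm_closed[OF lm] a_ac)
    then show "w \<in> coset (X j) (Bd j) (r \<odot>\<^bsub>X j\<^esub> z)" unfolding coset_def using B_add B_smult bb r by blast
  next
    fix w assume "w \<in> coset (X j) (Bd j) (r \<odot>\<^bsub>X j\<^esub> z)"
    then obtain b where b: "b \<in> Bd j" "w = (r \<odot>\<^bsub>X j\<^esub> z) \<oplus>\<^bsub>X j\<^esub> b" unfolding coset_def by blast
    then have "w = (r \<odot>\<^bsub>X j\<^esub> (z \<oplus>\<^bsub>X j\<^esub> \<zero>\<^bsub>X j\<^esub>)) \<oplus>\<^bsub>X j\<^esub> b" using z by simp
    then show "w \<in> {(r \<odot>\<^bsub>X j\<^esub> u) \<oplus>\<^bsub>X j\<^esub> b | u b. u \<in> coset (X j) (Bd j) z \<and> b \<in> Bd j}"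
      unfolding coset_def using B_zero b by blast
  qed
qed

lemma coset_zero_iff: "z \<in> carrier (X j) \<Longrightarrow> coset (X j) (Bd j) z = coset (X j) (Bd j) \<zero>\<^bsub>X j\<^esub> \<longleftrightarrow> z \<in> Bd j"
proof -
  assume z: "z \<in> carrier (X j)"
  interpret abelian_group "X j" by (rule ag)
  have Bc: "b \<in> Bd j \<Longrightarrow> b \<in> carrier (X j)" for b using B_sub by blast
  have c0: "coset (X j) (Bd j) \<zero>\<^bsub>X j\<^esub> = Bd j"
  proof (intro Set.set_eqI HOL.iffI)
    fix w assume "w \<in> coset (X j) (Bd j) \<zero>\<^bsub>X j\<^esub>"
    then show "w \<in> Bd j" unfolding coset_def using Bc by auto
  next
    fix w assume w: "w \<in> Bd j"
    then have "w = \<zero>\<^bsub>X j\<^esub> \<oplus>\<^bsub>X j\<^esub> w" using Bc by simp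
    then show "w \<in> coset (X j) (Bd j) \<zero>\<^bsub>X j\<^esub>" unfolding coset_def using w by blast
  qed
  show ?thesis
  proof
    assume "coset (X j) (Bd j) z = coset (X j) (Bd j) \<zero>\<^bsub>X j\<^esub>"
    moreover have "z \<in> coset (X j) (Bd j) z"
    proof -
      have "z = z \<oplus>\<^bsub>X j\<^esub> \<zero>\<^bsub>X j\<^esub>" using z by simp
      then show ?thesis unfolding coset_def using B_zero by blast
    qed
    ultimately show "z \<in> Bd j" using c0 by simp
  next
    assume zB: "z \<in> Bd j"
    show "coset (X j) (Bd j) z = coset (X j) (Bd j) \<zero>\<^bsub>X j\<^esub>"
      unfolding c0
    proof (intro Set.set_eqI HOL.iffI)
      fix w assume "w \<in> coset (X j) (Bd j) z"
      then show "w \<in> Bd j" unfolding coset_def using B_add zB by blast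
    next
      fix w assume w: "w \<in> Bd j"
      have "w = z \<oplus>\<^bsub>X j\<^esub> (\<ominus>\<^bsub>X j\<^esub> z \<oplus>\<^bsub>X j\<^esub> w)" using z Bc[OF w] by (simp add: r_neg2)
      then show "w \<in> coset (X j) (Bd j) z" unfolding coset_def using B_add B_neg zB w by blast
    qed
  qed
qed

lemma homology_pi:
  assumes M: "left_module R M" and iso: "mod_iso R (homology X d j) (pow_mod M k)"
  shows "\<exists>\<pi>. (\<forall>z\<in>Zc j. \<pi> z \<in> carrier (pow_mod M k))
     \<and> (\<forall>z\<in>Zc j. \<forall>z'\<in>Zc j. \<pi> (z \<oplus>\<^bsub>X j\<^esub> z') = \<pi> z \<oplus>\<^bsub>pow_mod M k\<^esub> \<pi> z')
     \<and> (\<forall>r\<in>carrier R. \<forall>z\<in>Zc j. \<pi> (r \<odot>\<^bsub>X j\<^esub> z) = r \<odot>\<^bsub>pow_mod M k\<^esub> \<pi> z)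
     \<and> (\<forall>y\<in>carrier (pow_mod M k). \<exists>z\<in>Zc j. \<pi> z = y)
     \<and> (\<forall>z\<in>Zc j. \<pi> z = \<zero>\<^bsub>pow_mod M k\<^esub> \<longleftrightarrow> z \<in> Bd j)"
proof -
  obtain f where f: "lin_map R (homology X d j) (pow_mod M k) f"
    and bij: "bij_betw f (carrier (homology X d j)) (carrier (pow_mod M k))"
    using iso unfolding mod_iso_def by blast
  define \<pi> where "\<pi> z = f (coset (X j) (Bd j) z)" for z
  have PM: "left_module R (pow_mod M k)" using pow_mod_lm[OF M] .
  have cH: "z \<in> Zc j \<Longrightarrow> coset (X j) (Bd j) z \<in> carrier (homology X d j)" for z
    by (simp add: homology_simps)
  have Zc: "z \<in> Zc j \<Longrightarrow> z \<in> carrier (X j)" for z using Z_sub by blast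
  have p1: "\<forall>z\<in>Zc j. \<pi> z \<in> carrier (pow_mod M k)"
    unfolding \<pi>_def using cH lin_mapD(1)[OF f] by blast
  have p2: "\<forall>z\<in>Zc j. \<forall>z'\<in>Zc j. \<pi> (z \<oplus>\<^bsub>X j\<^esub> z') = \<pi> z \<oplus>\<^bsub>pow_mod M k\<^esub> \<pi> z'"
  proof (intro ballI)
    fix z z' assume z: "z \<in> Zc j" and z': "z' \<in> Zc j"
    have "coset (X j) (Bd j) (z \<oplus>\<^bsub>X j\<^esub> z') = coset (X j) (Bd j) z \<oplus>\<^bsub>homology X d j\<^esub> coset (X j) (Bd j) z'"
      using coset_add[OF Zc[OF z] Zc[OF z']] by (simp add: homology_simps)
    then show "\<pi> (z \<oplus>\<^bsub>X j\<^esub> z') = \<pi> z \<oplus>\<^bsub>pow_mod M k\<^esub> \<pi> z'"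
      unfolding \<pi>_def using lin_mapD(2)[OF f cH[OF z] cH[OF z']] by simp
  qed
  have p3: "\<forall>r\<in>carrier R. \<forall>z\<in>Zc j. \<pi> (r \<odot>\<^bsub>X j\<^esub> z) = r \<odot>\<^bsub>pow_mod M k\<^esub> \<pi> z"
  proof (intro ballI)
    fix r z assume r: "r \<in> carrier R" and z: "z \<in> Zc j"
    have "coset (X j) (Bd j) (r \<odot>\<^bsub>X j\<^esub> z) = r \<odot>\<^bsub>homology X d j\<^esub> coset (X j) (Bd j) z"
      using coset_smult[OF r Zc[OF z]] by (simp add: homology_simps)
    then show "\<pi> (r \<odot>\<^bsub>X j\<^esub> z) = r \<odot>\<^bsub>pow_mod M k\<^esub> \<pi> z"
      unfolding \<pi>_def using lin_mapD(3)[OF f r cH[OF z]] by simp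
  qed
  have p4: "\<forall>y\<in>carrier (pow_mod M k). \<exists>z\<in>Zc j. \<pi> z = y"
  proof
    fix y assume y: "y \<in> carrier (pow_mod M k)"
    have "y \<in> f ` carrier (homology X d j)" using bij y unfolding bij_betw_def by simp
    then obtain U where "U \<in> carrier (homology X d j)" "f U = y" by (rule imageE) simp
    then show "\<exists>z\<in>Zc j. \<pi> z = y" unfolding \<pi>_def by (auto simp: homology_simps)
  qed
  have z0: "\<pi> \<zero>\<^bsub>X j\<^esub> = \<zero>\<^bsub>pow_mod M k\<^esub>"
  proof -
    have "\<pi> (\<zero>\<^bsub>X j\<^esub> \<oplus>\<^bsub>X j\<^esub> \<zero>\<^bsub>X j\<^esub>) = \<pi> \<zero>\<^bsub>X j\<^esub> \<oplus>\<^bsub>pow_mod M k\<^esub> \<pi> \<zero>\<^bsub>X j\<^esub>"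
      using p2 Z_zero by blast
    moreover have "\<zero>\<^bsub>X j\<^esub> \<oplus>\<^bsub>X j\<^esub> \<zero>\<^bsub>X j\<^esub> = \<zero>\<^bsub>X j\<^esub>"
      using ag_r_zero[OF ag] ag_zero_closed[OF ag] by blast
    ultimately have "\<pi> \<zero>\<^bsub>X j\<^esub> \<oplus>\<^bsub>pow_mod M k\<^esub> \<pi> \<zero>\<^bsub>X j\<^esub> = \<pi> \<zero>\<^bsub>X j\<^esub>" by simp
    moreover have "\<pi> \<zero>\<^bsub>X j\<^esub> \<in> carrier (pow_mod M k)" using p1 Z_zero by blast
    ultimately show ?thesis by (rule ag_cancel_self[OF lm_ag[OF PM], rotated])
  qed
  have p5: "\<forall>z\<in>Zc j. \<pi> z = \<zero>\<^bsub>pow_mod M k\<^esub> \<longleftrightarrow> z \<in> Bd j"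
  proof
    fix z assume z: "z \<in> Zc j"
    have "\<pi> z = \<zero>\<^bsub>pow_mod M k\<^esub> \<longleftrightarrow> \<pi> z = \<pi> \<zero>\<^bsub>X j\<^esub>" using z0 by simp
    also have "\<dots> \<longleftrightarrow> coset (X j) (Bd j) z = coset (X j) (Bd j) \<zero>\<^bsub>X j\<^esub>"
      unfolding \<pi>_def by (rule inj_on_eq_iff[OF bij_betw_imp_inj_on[OF bij] cH[OF z] cH[OF Z_zero]])
    also have "\<dots> \<longleftrightarrow> z \<in> Bd j" using coset_zero_iff Zc[OF z] by blast
    finally show "\<pi> z = \<zero>\<^bsub>pow_mod M k\<^esub> \<longleftrightarrow> z \<in> Bd j" .
  qed
  show ?thesis by (rule exI[of _ \<pi>]) (intro conjI p1 p2 p3 p4 p5)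
qed

end

lemma sub_minus_hom:
  assumes A: "abelian_group A" and B: "abelian_group B"
    and S: "S \<subseteq> carrier A" "\<And>x y. x \<in> S \<Longrightarrow> y \<in> S \<Longrightarrow> x \<ominus>\<^bsub>A\<^esub> y \<in> S"
    and g: "\<And>x. x \<in> S \<Longrightarrow> g x \<in> carrier B"
      "\<And>x y. x \<in> S \<Longrightarrow> y \<in> S \<Longrightarrow> g (x \<oplus>\<^bsub>A\<^esub> y) = g x \<oplus>\<^bsub>B\<^esub> g y"
    and x: "x \<in> S" and y: "y \<in> S"
  shows "g (x \<ominus>\<^bsub>A\<^esub> y) = g x \<ominus>\<^bsub>B\<^esub> g y"
proof -
  interpret A: abelian_group A by (rule A)
  interpret B: abelian_group B by (rule B)
  have xyS: "x \<ominus>\<^bsub>A\<^esub> y \<in> S" using S x y by blast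
  have xc: "x \<in> carrier A" "y \<in> carrier A" using S x y by auto
  have "(x \<ominus>\<^bsub>A\<^esub> y) \<oplus>\<^bsub>A\<^esub> y = x" using xc by (simp add: A.minus_eq A.a_assoc A.l_neg)
  then have "g (x \<ominus>\<^bsub>A\<^esub> y) \<oplus>\<^bsub>B\<^esub> g y = g x" using g(2)[OF xyS y] by simp
  then have "g (x \<ominus>\<^bsub>A\<^esub> y) \<oplus>\<^bsub>B\<^esub> g y \<ominus>\<^bsub>B\<^esub> g y = g x \<ominus>\<^bsub>B\<^esub> g y" by simp
  then show ?thesis using g(1)[OF xyS] g(1)[OF y] by (simp add: B.minus_eq B.a_assoc B.r_neg)
qed

locale main_ctx = cplx R X d for R :: "'r ring" and X :: "int \<Rightarrow> ('r, 'b) module" and d +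
  fixes M :: "('r, 'm) module" and Q :: "nat \<Rightarrow> ('r, 'q) module" and e :: "nat \<Rightarrow> 'q \<Rightarrow> 'q"
    and \<epsilon> :: "'q \<Rightarrow> 'm" and n :: "int \<Rightarrow> nat" and \<pi> :: "int \<Rightarrow> 'b \<Rightarrow> nat \<Rightarrow> 'm"
    and j0 a t :: int
  assumes projX: "\<And>i. projective R (X i)"
    and M: "left_module R M"
    and res: "proj_resolution R M Q e \<epsilon>"
    and extM: "ext_vanish_pos R Q e M" and extR: "ext_vanish_pos R Q e (ring_mod R)"
    and pi_c: "\<And>j z. j0 \<le> j \<Longrightarrow> z \<in> Zc j \<Longrightarrow> \<pi> j z \<in> carrier (pow_mod M (n j))"
    and pi_add: "\<And>j z z'. j0 \<le> j \<Longrightarrow> z \<in> Zc j \<Longrightarrow> z' \<in> Zc j \<Longrightarrow>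
        \<pi> j (z \<oplus>\<^bsub>X j\<^esub> z') = \<pi> j z \<oplus>\<^bsub>pow_mod M (n j)\<^esub> \<pi> j z'"
    and pi_smult: "\<And>j r z. j0 \<le> j \<Longrightarrow> r \<in> carrier R \<Longrightarrow> z \<in> Zc j \<Longrightarrow>
        \<pi> j (r \<odot>\<^bsub>X j\<^esub> z) = r \<odot>\<^bsub>pow_mod M (n j)\<^esub> \<pi> j z"
    and pi_surj: "\<And>j y. j0 \<le> j \<Longrightarrow> y \<in> carrier (pow_mod M (n j)) \<Longrightarrow> \<exists>z\<in>Zc j. \<pi> j z = y"
    and pi_zero: "\<And>j z. j0 \<le> j \<Longrightarrow> z \<in> Zc j \<Longrightarrow> (\<pi> j z = \<zero>\<^bsub>pow_mod M (n j)\<^esub>) = (z \<in> Bd j)"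
    and nj0: "0 < n j0"
    and low: "\<And>j z. j < j0 \<Longrightarrow> z \<in> Zc j \<Longrightarrow> z \<in> Bd j"
    and bot: "\<And>j. j < a \<Longrightarrow> carrier (X j) = {\<zero>\<^bsub>X j\<^esub>}"
    and top: "\<And>j. t < j \<Longrightarrow> carrier (X j) = {\<zero>\<^bsub>X j\<^esub>}"
begin

subsection \<open>Splitting below j0\<close>

definition split_at :: "int \<Rightarrow> bool" where
  "split_at j \<longleftrightarrow> (\<exists>s. lin_map R (X j) (X (j + 1)) s \<and> (\<forall>z\<in>Zc j. d (j + 1) (s z) = z))"

lemma split_bot: "j < a \<Longrightarrow> split_at j"
  unfolding split_at_def
proof (intro exI conjI)
  assume j: "j < a"
  show "lin_map R (X j) (X (j + 1)) (\<lambda>x. \<zero>\<^bsub>X (j + 1)\<^esub>)" by (rule lin_map_zero[OF lm])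
  show "\<forall>z\<in>Zc j. d (j + 1) \<zero>\<^bsub>X (j + 1)\<^esub> = z"
  proof
    fix z assume "z \<in> Zc j"
    then have "z = \<zero>\<^bsub>X j\<^esub>" using bot[OF j] Z_sub by blast
    then show "d (j + 1) \<zero>\<^bsub>X (j + 1)\<^esub> = z" using d_zero' by simp
  qed
qed

lemma split_step:
  assumes s: "lin_map R (X (i - 1)) (X i) s" "\<And>z. z \<in> Zc (i - 1) \<Longrightarrow> d i (s z) = z"
    and i: "i < j0"
  shows "split_at i"
proof -
  define u where "u x = x \<ominus>\<^bsub>X i\<^esub> s (d i x)" for x
  have ulin: "lin_map R (X i) (X i) u"
    unfolding u_def
    by (rule lin_map_diff[OF _ lin_comp[OF d_lin0 s(1)] lm]) (rule lin_mapI, auto)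
  have uZ: "u x \<in> Zc i" if x: "x \<in> carrier (X i)" for x
  proof -
    have dx: "d i x \<in> Zc (i - 1)" using d_in_Z[OF x] .
    have "d i (u x) = d i x \<ominus>\<^bsub>X (i - 1)\<^esub> d i (s (d i x))"
      unfolding u_def by (rule lin_diff[OF d_lin0 lm lm x]) (use lin_mapD(1)[OF s(1)] d_closed0[OF x] in blast)
    also have "\<dots> = \<zero>\<^bsub>X (i - 1)\<^esub>" using s(2)[OF dx] ag_diff_zero[OF ag] d_closed0[OF x] by simp
    finally show ?thesis unfolding cycles_def using lin_mapD(1)[OF ulin x] by simp
  qed
  have uB: "\<exists>y\<in>carrier (X (i + 1)). d (i + 1) y = u x" if x: "x \<in> carrier (X i)" for x
  proof -
    have "u x \<in> Bd i" using low[OF i uZ[OF x]] .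
    then obtain y where "y \<in> carrier (X (i + 1))" "u x = d (i + 1) y" unfolding boundaries_def by blast
    then show ?thesis by auto
  qed
  have "\<exists>h. lin_map R (X i) (X (i + 1)) h \<and> (\<forall>x\<in>carrier (X i). h x \<in> carrier (X (i + 1)) \<and> d (i + 1) (h x) = u x)"
    by (rule proj_lift[OF projX lm lm subset_refl ag_zero_closed[OF ag] ag_add_closed[OF ag] lm_closed[OF lm]
        lin_mapD[OF d_lin] ulin])
       (use uB in blast)+
  then obtain h where h: "lin_map R (X i) (X (i + 1)) h" "\<And>x. x \<in> carrier (X i) \<Longrightarrow> d (i + 1) (h x) = u x"
    by blast
  have "\<forall>z\<in>Zc i. d (i + 1) (h z) = z"
  proof
    fix z assume z: "z \<in> Zc i"
    have zc: "z \<in> carrier (X i)" and dz: "d i z = \<zero>\<^bsub>X (i - 1)\<^esub>" using z unfolding cycles_def by auto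
    have "s \<zero>\<^bsub>X (i - 1)\<^esub> = \<zero>\<^bsub>X i\<^esub>" using lin_zero[OF s(1) lm lm] .
    then have "u z = z" unfolding u_def using dz ag_diff_self_zero[OF ag zc] by simp
    then show "d (i + 1) (h z) = z" using h(2)[OF zc] by simp
  qed
  then show ?thesis unfolding split_at_def using h(1) by blast
qed

lemma split_all: "j < j0 \<Longrightarrow> split_at j"
proof -
  have main: "a - 1 + int m < j0 \<Longrightarrow> split_at (a - 1 + int m)" for m
  proof (induction m)
    case 0
    then show ?case using split_bot by simp
  next
    case (Suc m)
    then have "split_at (a - 1 + int m)" by simp
    then obtain s where s: "lin_map R (X (a - 1 + int m)) (X (a - 1 + int m + 1)) s"
      "\<forall>z\<in>Zc (a - 1 + int m). d (a - 1 + int m + 1) (s z) = z" unfolding split_at_def by blast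
    define i where "i = a + int m"
    have e1: "a - 1 + int m = i - 1" and e2: "a - 1 + int m + 1 = i" by (simp_all add: i_def)
    have s1: "lin_map R (X (i - 1)) (X i) s" using s(1) by (simp only: e2) (simp only: e1)
    have s2: "\<And>z. z \<in> Zc (i - 1) \<Longrightarrow> d i (s z) = z" using s(2) by (simp only: e2) (simp only: e1)
    have ii: "a - 1 + int (Suc m) = i" by (simp add: i_def)
    show ?case unfolding ii by (rule split_step[OF s1]) (use s2 Suc.prems[unfolded ii] in auto)
  qed
  assume j: "j < j0"
  show ?thesis
  proof (cases "j < a")
    case True then show ?thesis by (rule split_bot)
  next
    case False
    then have "j = a - 1 + int (nat (j - a + 1))" by simp
    then show ?thesis using main[of "nat (j - a + 1)"] j by simp
  qed
qed

definition Y where "Y k = X (j0 + int k)"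
definition D where "D k = d (j0 + int k)"
definition Nm where "Nm k = pow_mod M (n (j0 + int k))"
definition pk where "pk k = \<pi> (j0 + int k)"
abbreviation "ZY k \<equiv> Zc (j0 + int k)"
abbreviation "BY k \<equiv> Bd (j0 + int k)"

lemma Y_lm: "left_module R (Y k)" unfolding Y_def by (rule lm)
lemma Y_ag: "abelian_group (Y k)" unfolding Y_def by (rule ag)
lemma Y_proj: "projective R (Y k)" unfolding Y_def by (rule projX)
lemma Nm_lm: "left_module R (Nm k)" unfolding Nm_def by (rule pow_mod_lm[OF M])
lemma Nm_ag: "abelian_group (Nm k)" using lm_ag[OF Nm_lm] .

lemma Y_Suc: "Y (Suc k) = X (j0 + int k + 1)" by (simp add: Y_def ac_simps)
lemma D_Suc: "D (Suc k) = d (j0 + int k + 1)" by (simp add: D_def ac_simps)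

lemma D_lin: "lin_map R (Y (Suc k)) (Y k) (D (Suc k))"
  unfolding Y_Suc D_Suc by (simp add: Y_def d_lin)
lemma D_closed: "x \<in> carrier (Y (Suc k)) \<Longrightarrow> D (Suc k) x \<in> carrier (Y k)"
  using lin_mapD(1)[OF D_lin] .
lemma BY_eq: "BY k = D (Suc k) ` carrier (Y (Suc k))"
  unfolding boundaries_def Y_Suc D_Suc by simp
lemma ZY_Suc: "ZY (Suc k) = {x \<in> carrier (Y (Suc k)). D (Suc k) x = \<zero>\<^bsub>Y k\<^esub>}"
  unfolding cycles_def Y_def D_def by simp
lemma ZY_sub: "ZY k \<subseteq> carrier (Y k)" unfolding Y_def using Z_sub .
lemma BY_sub_ZY: "BY k \<subseteq> ZY k" using B_Z .
lemma DD: "x \<in> carrier (Y (Suc (Suc k))) \<Longrightarrow> D (Suc k) (D (Suc (Suc k)) x) = \<zero>\<^bsub>Y k\<^esub>"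
proof -
  assume x: "x \<in> carrier (Y (Suc (Suc k)))"
  have "D (Suc (Suc k)) x \<in> BY (Suc k)" unfolding BY_eq using x by blast
  then have "D (Suc (Suc k)) x \<in> ZY (Suc k)" using BY_sub_ZY by blast
  then show ?thesis unfolding ZY_Suc by simp
qed

lemma pk_c: "z \<in> ZY k \<Longrightarrow> pk k z \<in> carrier (Nm k)"
  unfolding pk_def Nm_def by (rule pi_c) simp_all
lemma pk_add: "z \<in> ZY k \<Longrightarrow> z' \<in> ZY k \<Longrightarrow> pk k (z \<oplus>\<^bsub>Y k\<^esub> z') = pk k z \<oplus>\<^bsub>Nm k\<^esub> pk k z'"
  unfolding pk_def Nm_def Y_def by (rule pi_add) simp_all
lemma pk_smult: "r \<in> carrier R \<Longrightarrow> z \<in> ZY k \<Longrightarrow> pk k (r \<odot>\<^bsub>Y k\<^esub> z) = r \<odot>\<^bsub>Nm k\<^esub> pk k z"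
  unfolding pk_def Nm_def Y_def by (rule pi_smult) simp_all
lemma pk_surj: "y \<in> carrier (Nm k) \<Longrightarrow> \<exists>z\<in>ZY k. pk k z = y"
  unfolding pk_def Nm_def by (rule pi_surj) simp_all
lemma pk_zero: "z \<in> ZY k \<Longrightarrow> (pk k z = \<zero>\<^bsub>Nm k\<^esub>) = (z \<in> BY k)"
  unfolding pk_def Nm_def by (rule pi_zero) simp_all

lemma ZY_zero: "\<zero>\<^bsub>Y k\<^esub> \<in> ZY k" unfolding Y_def by (rule Z_zero)
lemma ZY_add: "x \<in> ZY k \<Longrightarrow> y \<in> ZY k \<Longrightarrow> x \<oplus>\<^bsub>Y k\<^esub> y \<in> ZY k" unfolding Y_def by (rule Z_add)
lemma ZY_diff: "x \<in> ZY k \<Longrightarrow> y \<in> ZY k \<Longrightarrow> x \<ominus>\<^bsub>Y k\<^esub> y \<in> ZY k" unfolding Y_def by (rule Z_diff)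
lemma ZY_smult: "r \<in> carrier R \<Longrightarrow> x \<in> ZY k \<Longrightarrow> r \<odot>\<^bsub>Y k\<^esub> x \<in> ZY k" unfolding Y_def by (rule Z_smult)

lemma pk_diff: "z \<in> ZY k \<Longrightarrow> z' \<in> ZY k \<Longrightarrow> pk k (z \<ominus>\<^bsub>Y k\<^esub> z') = pk k z \<ominus>\<^bsub>Nm k\<^esub> pk k z'"
  by (rule sub_minus_hom[OF Y_ag Nm_ag ZY_sub ZY_diff pk_c pk_add])

lemma pk_zero0: "pk k \<zero>\<^bsub>Y k\<^esub> = \<zero>\<^bsub>Nm k\<^esub>"
  using pk_zero[OF ZY_zero] B_zero unfolding Y_def by simp

lemmas resu = res[unfolded proj_resolution_def]
lemma Q_proj: "projective R (Q k)" using resu[THEN conjunct1] by blast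
lemma Q_lm: "left_module R (Q k)" using projective_lm[OF Q_proj] .
lemma Q_ag: "abelian_group (Q k)" using lm_ag[OF Q_lm] .
lemma e_lin: "lin_map R (Q (Suc k)) (Q k) (e (Suc k))"
  using resu[THEN conjunct2, THEN conjunct1, rule_format, of "Suc k"] by simp
lemma e_closed: "x \<in> carrier (Q (Suc k)) \<Longrightarrow> e (Suc k) x \<in> carrier (Q k)"
  using lin_mapD(1)[OF e_lin] .
lemma eps_lin: "lin_map R (Q 0) M \<epsilon>" using resu[THEN conjunct2, THEN conjunct2, THEN conjunct1] .
lemma eps_surj: "\<epsilon> ` carrier (Q 0) = carrier M"
  using resu[THEN conjunct2, THEN conjunct2, THEN conjunct2, THEN conjunct1] .
lemma ker_eps: "{x \<in> carrier (Q 0). \<epsilon> x = \<zero>\<^bsub>M\<^esub>} = e 1 ` carrier (Q 1)"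
  using resu[THEN conjunct2, THEN conjunct2, THEN conjunct2, THEN conjunct2, THEN conjunct1] .
lemma ker_e: "{x \<in> carrier (Q (Suc k)). e (Suc k) x = \<zero>\<^bsub>Q k\<^esub>} = e (Suc (Suc k)) ` carrier (Q (Suc (Suc k)))"
  using resu[THEN conjunct2, THEN conjunct2, THEN conjunct2, THEN conjunct2, THEN conjunct2, rule_format, of "Suc k"]
  by simp
lemma ee: "x \<in> carrier (Q (Suc (Suc k))) \<Longrightarrow> e (Suc k) (e (Suc (Suc k)) x) = \<zero>\<^bsub>Q k\<^esub>"
  using ker_e by blast
lemma ee0: "x \<in> carrier (Q 1) \<Longrightarrow> \<epsilon> (e 1 x) = \<zero>\<^bsub>M\<^esub>"
  using ker_eps by blast

lemma ext_use:
  assumes ext: "ext_vanish_pos R Q e N" and \<phi>: "lin_map R (Q (Suc k)) N \<phi>"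
    and c: "\<And>x. x \<in> carrier (Q (Suc (Suc k))) \<Longrightarrow> \<phi> (e (Suc (Suc k)) x) = \<zero>\<^bsub>N\<^esub>"
  shows "\<exists>\<psi>. lin_map R (Q k) N \<psi> \<and> (\<forall>x\<in>carrier (Q (Suc k)). \<phi> x = \<psi> (e (Suc k) x))"
proof -
  have h: "lin_map R (Q (Suc k)) N \<phi> \<and> (\<forall>x\<in>carrier (Q (Suc k + 1)). \<phi> (e (Suc k + 1) x) = \<zero>\<^bsub>N\<^esub>)"
    using \<phi> c by simp
  have o: "1 \<le> Suc k" by simp
  show ?thesis using ext[unfolded ext_vanish_pos_def, rule_format, OF o h] by simp
qed

lemma ext_Nm: "ext_vanish_pos R Q e (Nm k)" unfolding Nm_def by (rule ext_pow[OF M extM])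
lemma ext_Y: "ext_vanish_pos R Q e (Y k)" by (rule ext_proj[OF ringR extR Y_proj])

definition iota :: "'m \<Rightarrow> nat \<Rightarrow> 'm" where
  "iota m = (\<lambda>i. if i = 0 then m else \<zero>\<^bsub>M\<^esub>)"

lemma iota_lin: "lin_map R M (Nm 0) iota"
proof -
  have "n (j0 + int 0) > 0" using nj0 by simp
  then show ?thesis
    unfolding Nm_def iota_def
    by (intro lin_mapI) (auto intro!: ext simp: ag_zero_closed[OF lm_ag[OF M]] ag_r_zero[OF lm_ag[OF M]]
        lm_smult_zero[OF M])
qed

subsection \<open>Ascent: a chain map from the resolution\<close>

definition asc :: "nat \<Rightarrow> (nat \<Rightarrow> 'q \<Rightarrow> 'b) \<Rightarrow> bool" where
  "asc K f \<longleftrightarrow> (\<forall>k\<le>K. lin_map R (Q k) (Y k) (f k)) \<and>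
     (\<forall>x\<in>carrier (Q 0). f 0 x \<in> ZY 0 \<and> pk 0 (f 0 x) = iota (\<epsilon> x)) \<and>
     (\<forall>k<K. \<forall>x\<in>carrier (Q (Suc k)). D (Suc k) (f (Suc k) x) = f k (e (Suc k) x)) \<and>
     (\<forall>k\<le>K. \<forall>x\<in>carrier (Q (Suc k)). f k (e (Suc k) x) \<in> BY k)"

lemma iota_zero: "iota \<zero>\<^bsub>M\<^esub> = \<zero>\<^bsub>Nm 0\<^esub>"
  using lin_zero[OF iota_lin M Nm_lm] .

lemma asc0: "\<exists>f. asc 0 f"
proof -
  have ie: "lin_map R (Q 0) (Nm 0) (\<lambda>x. iota (\<epsilon> x))" by (rule lin_comp[OF eps_lin iota_lin])
  have "\<exists>h. lin_map R (Q 0) (Y 0) h \<and> (\<forall>x\<in>carrier (Q 0). h x \<in> ZY 0 \<and> pk 0 (h x) = iota (\<epsilon> x))"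
    by (rule proj_lift[OF Q_proj Y_lm Nm_lm ZY_sub ZY_zero ZY_add ZY_smult pk_c pk_add pk_smult ie])
       (use pk_surj lin_mapD(1)[OF ie] in blast)+
  then obtain h where h: "lin_map R (Q 0) (Y 0) h" "\<And>x. x \<in> carrier (Q 0) \<Longrightarrow> h x \<in> ZY 0 \<and> pk 0 (h x) = iota (\<epsilon> x)"
    by blast
  have "h (e (Suc 0) x) \<in> BY 0" if x: "x \<in> carrier (Q (Suc 0))" for x
  proof -
    have ex: "e (Suc 0) x \<in> carrier (Q 0)" using e_closed[OF x] .
    have "\<epsilon> (e (Suc 0) x) = \<zero>\<^bsub>M\<^esub>" using ee0 x by simp
    then have "pk 0 (h (e (Suc 0) x)) = \<zero>\<^bsub>Nm 0\<^esub>" using h(2)[OF ex] iota_zero by simp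
    then show ?thesis using pk_zero h(2)[OF ex] by blast
  qed
  then have "asc 0 (\<lambda>k. h)" unfolding asc_def using h by auto
  then show ?thesis by blast
qed

lemma asc_step:
  assumes f: "asc K f"
  shows "\<exists>f'. asc (Suc K) f'"
proof -
  have flin: "\<And>k. k \<le> K \<Longrightarrow> lin_map R (Q k) (Y k) (f k)"
    and f0: "\<And>x. x \<in> carrier (Q 0) \<Longrightarrow> f 0 x \<in> ZY 0 \<and> pk 0 (f 0 x) = iota (\<epsilon> x)"
    and fD: "\<And>k x. k < K \<Longrightarrow> x \<in> carrier (Q (Suc k)) \<Longrightarrow> D (Suc k) (f (Suc k) x) = f k (e (Suc k) x)"
    and fB: "\<And>k x. k \<le> K \<Longrightarrow> x \<in> carrier (Q (Suc k)) \<Longrightarrow> f k (e (Suc k) x) \<in> BY k"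
    using f unfolding asc_def by auto
  have fe: "lin_map R (Q (Suc K)) (Y K) (\<lambda>x. f K (e (Suc K) x))" by (rule lin_comp[OF e_lin flin]) simp
  have "\<exists>h. lin_map R (Q (Suc K)) (Y (Suc K)) h \<and>
      (\<forall>x\<in>carrier (Q (Suc K)). h x \<in> carrier (Y (Suc K)) \<and> D (Suc K) (h x) = f K (e (Suc K) x))"
    by (rule proj_lift[OF Q_proj Y_lm Y_lm subset_refl ag_zero_closed[OF Y_ag] ag_add_closed[OF Y_ag]
          lm_closed[OF Y_lm] lin_mapD[OF D_lin] fe])
       (use fB[of K] in \<open>auto simp: BY_eq image_iff\<close>, metis)
  then obtain h where hlin: "lin_map R (Q (Suc K)) (Y (Suc K)) h"
    and hD: "\<And>x. x \<in> carrier (Q (Suc K)) \<Longrightarrow> D (Suc K) (h x) = f K (e (Suc K) x)" by blast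
  have hZ: "h (e (Suc (Suc K)) x) \<in> ZY (Suc K)" if x: "x \<in> carrier (Q (Suc (Suc K)))" for x
  proof -
    have ex: "e (Suc (Suc K)) x \<in> carrier (Q (Suc K))" using e_closed[OF x] .
    have "D (Suc K) (h (e (Suc (Suc K)) x)) = f K \<zero>\<^bsub>Q K\<^esub>" using hD[OF ex] ee[OF x] by simp
    also have "\<dots> = \<zero>\<^bsub>Y K\<^esub>" using lin_zero[OF flin Q_lm Y_lm] by simp
    finally show ?thesis unfolding ZY_Suc using lin_mapD(1)[OF hlin ex] by simp
  qed
  define \<phi> where "\<phi> x = pk (Suc K) (h (e (Suc (Suc K)) x))" for x
  have \<phi>lin: "lin_map R (Q (Suc (Suc K))) (Nm (Suc K)) \<phi>"
  proof (rule lin_mapI)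
    fix x assume "x \<in> carrier (Q (Suc (Suc K)))"
    then show "\<phi> x \<in> carrier (Nm (Suc K))" unfolding \<phi>_def using pk_c hZ by blast
  next
    fix x y assume x: "x \<in> carrier (Q (Suc (Suc K)))" and y: "y \<in> carrier (Q (Suc (Suc K)))"
    show "\<phi> (x \<oplus>\<^bsub>Q (Suc (Suc K))\<^esub> y) = \<phi> x \<oplus>\<^bsub>Nm (Suc K)\<^esub> \<phi> y"
      unfolding \<phi>_def using lin_mapD(2)[OF e_lin x y] lin_mapD(2)[OF hlin e_closed[OF x] e_closed[OF y]]
        pk_add[OF hZ[OF x] hZ[OF y]] by simp
  next
    fix r x assume r: "r \<in> carrier R" and x: "x \<in> carrier (Q (Suc (Suc K)))"
    show "\<phi> (r \<odot>\<^bsub>Q (Suc (Suc K))\<^esub> x) = r \<odot>\<^bsub>Nm (Suc K)\<^esub> \<phi> x"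
      unfolding \<phi>_def using lin_mapD(3)[OF e_lin r x] lin_mapD(3)[OF hlin r e_closed[OF x]]
        pk_smult[OF r hZ[OF x]] by simp
  qed
  have \<phi>c: "\<phi> (e (Suc (Suc (Suc K))) x) = \<zero>\<^bsub>Nm (Suc K)\<^esub>" if x: "x \<in> carrier (Q (Suc (Suc (Suc K))))" for x
  proof -
    have "h (e (Suc (Suc K)) (e (Suc (Suc (Suc K))) x)) = \<zero>\<^bsub>Y (Suc K)\<^esub>"
      using ee[OF x] lin_zero[OF hlin Q_lm Y_lm] by simp
    then show ?thesis unfolding \<phi>_def using pk_zero0 by simp
  qed
  obtain \<psi> where \<psi>: "lin_map R (Q (Suc K)) (Nm (Suc K)) \<psi>"
    "\<And>x. x \<in> carrier (Q (Suc (Suc K))) \<Longrightarrow> \<phi> x = \<psi> (e (Suc (Suc K)) x)"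
    using ext_use[OF ext_Nm \<phi>lin \<phi>c] by blast
  have "\<exists>h'. lin_map R (Q (Suc K)) (Y (Suc K)) h' \<and>
      (\<forall>x\<in>carrier (Q (Suc K)). h' x \<in> ZY (Suc K) \<and> pk (Suc K) (h' x) = \<psi> x)"
    by (rule proj_lift[OF Q_proj Y_lm Nm_lm ZY_sub ZY_zero ZY_add ZY_smult pk_c pk_add pk_smult \<psi>(1)])
       (use pk_surj lin_mapD(1)[OF \<psi>(1)] in blast)+
  then obtain h' where h'lin: "lin_map R (Q (Suc K)) (Y (Suc K)) h'"
    and h'Z: "\<And>x. x \<in> carrier (Q (Suc K)) \<Longrightarrow> h' x \<in> ZY (Suc K)"
    and h'p: "\<And>x. x \<in> carrier (Q (Suc K)) \<Longrightarrow> pk (Suc K) (h' x) = \<psi> x" by blast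
  define g where "g x = h x \<ominus>\<^bsub>Y (Suc K)\<^esub> h' x" for x
  have glin: "lin_map R (Q (Suc K)) (Y (Suc K)) g"
    unfolding g_def by (rule lin_map_diff[OF hlin h'lin Y_lm])
  have gD: "D (Suc K) (g x) = f K (e (Suc K) x)" if x: "x \<in> carrier (Q (Suc K))" for x
  proof -
    have "D (Suc K) (g x) = D (Suc K) (h x) \<ominus>\<^bsub>Y K\<^esub> D (Suc K) (h' x)"
      unfolding g_def by (rule lin_diff[OF D_lin Y_lm Y_lm lin_mapD(1)[OF hlin x] lin_mapD(1)[OF h'lin x]])
    also have "D (Suc K) (h' x) = \<zero>\<^bsub>Y K\<^esub>" using h'Z[OF x] unfolding ZY_Suc by simp
    finally show ?thesis using hD[OF x] ag_diff_self_zero[OF Y_ag] lin_mapD(1)[OF fe x] by simp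
  qed
  have gB: "g (e (Suc (Suc K)) x) \<in> BY (Suc K)" if x: "x \<in> carrier (Q (Suc (Suc K)))" for x
  proof -
    have ex: "e (Suc (Suc K)) x \<in> carrier (Q (Suc K))" using e_closed[OF x] .
    have gZ: "g (e (Suc (Suc K)) x) \<in> ZY (Suc K)" unfolding g_def by (rule ZY_diff[OF hZ[OF x] h'Z[OF ex]])
    have "pk (Suc K) (g (e (Suc (Suc K)) x)) = \<phi> x \<ominus>\<^bsub>Nm (Suc K)\<^esub> \<psi> (e (Suc (Suc K)) x)"
      unfolding g_def using pk_diff[OF hZ[OF x] h'Z[OF ex]] h'p[OF ex] by (simp add: \<phi>_def)
    also have "\<dots> = \<zero>\<^bsub>Nm (Suc K)\<^esub>" using \<psi>(2)[OF x] ag_diff_zero[OF Nm_ag] lin_mapD(1)[OF \<psi>(1) ex] by simp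
    finally show ?thesis using pk_zero[OF gZ] by simp
  qed
  define f' where "f' = f(Suc K := g)"
  have "asc (Suc K) f'"
    unfolding asc_def f'_def
  proof (intro conjI allI impI ballI)
    fix k assume "k \<le> Suc K"
    then show "lin_map R (Q k) (Y k) ((f(Suc K := g)) k)"
      using flin glin by (cases "k = Suc K") auto
  next
    fix x assume "x \<in> carrier (Q 0)"
    then show "(f(Suc K := g)) 0 x \<in> ZY 0" "pk 0 ((f(Suc K := g)) 0 x) = iota (\<epsilon> x)" using f0 by auto
  next
    fix k x assume k: "k < Suc K" and x: "x \<in> carrier (Q (Suc k))"
    show "D (Suc k) ((f(Suc K := g)) (Suc k) x) = (f(Suc K := g)) k (e (Suc k) x)"
    proof (cases "k = K")
      case True then show ?thesis using gD x by simp
    next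
      case False then show ?thesis using fD k x by simp
    qed
  next
    fix k x assume k: "k \<le> Suc K" and x: "x \<in> carrier (Q (Suc k))"
    show "(f(Suc K := g)) k (e (Suc k) x) \<in> BY k"
    proof (cases "k = Suc K")
      case True then show ?thesis using gB x by simp
    next
      case False then show ?thesis using fB k x by simp
    qed
  qed
  then show ?thesis by blast
qed

lemma asc_all: "\<exists>f. asc K f"
  by (induction K) (use asc0 asc_step in blast)+

subsection \<open>Descent\<close>

definition TT where "TT = Suc (nat (t - j0))"

lemma Y_top: "carrier (Y TT) = {\<zero>\<^bsub>Y TT\<^esub>}"
  unfolding Y_def TT_def by (rule top) simp

definition desc :: "(nat \<Rightarrow> 'q \<Rightarrow> 'b) \<Rightarrow> nat \<Rightarrow> ('q \<Rightarrow> 'b) \<Rightarrow> bool" where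
  "desc f m g \<longleftrightarrow> lin_map R (Q m) (Y m) g \<and>
     (\<forall>x\<in>carrier (Q (Suc m)). g (e (Suc m) x) = \<zero>\<^bsub>Y m\<^esub>) \<and>
     (m = 0 \<longrightarrow> (\<forall>x\<in>carrier (Q 0). g x \<in> ZY 0 \<and> pk 0 (g x) = iota (\<epsilon> x))) \<and>
     (\<forall>m'. m = Suc m' \<longrightarrow> (\<forall>x\<in>carrier (Q m). D m (g x) = f m' (e m x)))"

lemma desc_top:
  assumes f: "asc TT f"
  shows "desc f (TT - 1) (f (TT - 1))"
proof -
  obtain T' where T': "TT = Suc T'" unfolding TT_def by simp
  have flin: "\<And>k. k \<le> TT \<Longrightarrow> lin_map R (Q k) (Y k) (f k)"
    and f0: "\<And>x. x \<in> carrier (Q 0) \<Longrightarrow> f 0 x \<in> ZY 0 \<and> pk 0 (f 0 x) = iota (\<epsilon> x)"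
    and fD: "\<And>k x. k < TT \<Longrightarrow> x \<in> carrier (Q (Suc k)) \<Longrightarrow> D (Suc k) (f (Suc k) x) = f k (e (Suc k) x)"
    using f unfolding asc_def by auto
  have z: "f T' (e (Suc T') x) = \<zero>\<^bsub>Y T'\<^esub>" if x: "x \<in> carrier (Q (Suc T'))" for x
  proof -
    have "f (Suc T') x \<in> carrier (Y (Suc T'))" using lin_mapD(1)[OF flin x] T' by simp
    then have "f (Suc T') x = \<zero>\<^bsub>Y (Suc T')\<^esub>" using Y_top T' by simp
    then have "D (Suc T') (f (Suc T') x) = \<zero>\<^bsub>Y T'\<^esub>" using lin_zero[OF D_lin Y_lm Y_lm] by simp
    then show ?thesis using fD[of T' x] x T' by simp
  qed
  have "desc f T' (f T')"
    unfolding desc_def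
  proof (intro conjI allI impI ballI)
    show "lin_map R (Q T') (Y T') (f T')" using flin T' by simp
  next
    fix x assume "x \<in> carrier (Q (Suc T'))" then show "f T' (e (Suc T') x) = \<zero>\<^bsub>Y T'\<^esub>" by (rule z)
  next
    fix x assume "T' = 0" "x \<in> carrier (Q 0)"
    then show "f T' x \<in> ZY 0" "pk 0 (f T' x) = iota (\<epsilon> x)" using f0 by auto
  next
    fix m' x assume "T' = Suc m'" "x \<in> carrier (Q T')"
    then show "D T' (f T' x) = f m' (e T' x)" using fD[of m' x] T' by simp
  qed
  then show ?thesis using T' by simp
qed

lemma desc_step:
  assumes f: "asc TT f" and m: "Suc m < TT" and g': "desc f (Suc m) g'"
  shows "\<exists>g. desc f m g"
proof -
  have flin: "\<And>k. k \<le> TT \<Longrightarrow> lin_map R (Q k) (Y k) (f k)"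
    and f0: "\<And>x. x \<in> carrier (Q 0) \<Longrightarrow> f 0 x \<in> ZY 0 \<and> pk 0 (f 0 x) = iota (\<epsilon> x)"
    and fD: "\<And>k x. k < TT \<Longrightarrow> x \<in> carrier (Q (Suc k)) \<Longrightarrow> D (Suc k) (f (Suc k) x) = f k (e (Suc k) x)"
    using f unfolding asc_def by auto
  have fm: "lin_map R (Q m) (Y m) (f m)" using flin m by simp
  have g'lin: "lin_map R (Q (Suc m)) (Y (Suc m)) g'"
    and g'z: "\<And>x. x \<in> carrier (Q (Suc (Suc m))) \<Longrightarrow> g' (e (Suc (Suc m)) x) = \<zero>\<^bsub>Y (Suc m)\<^esub>"
    and g'D: "\<And>x. x \<in> carrier (Q (Suc m)) \<Longrightarrow> D (Suc m) (g' x) = f m (e (Suc m) x)"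
    using g' unfolding desc_def by auto
  obtain h where hlin: "lin_map R (Q m) (Y (Suc m)) h"
    and hg: "\<And>x. x \<in> carrier (Q (Suc m)) \<Longrightarrow> g' x = h (e (Suc m) x)"
    using ext_use[OF ext_Y g'lin g'z] by blast
  define g where "g x = f m x \<ominus>\<^bsub>Y m\<^esub> D (Suc m) (h x)" for x
  have Dh: "lin_map R (Q m) (Y m) (\<lambda>x. D (Suc m) (h x))" by (rule lin_comp[OF hlin D_lin])
  have glin: "lin_map R (Q m) (Y m) g" unfolding g_def by (rule lin_map_diff[OF fm Dh Y_lm])
  have DhB: "D (Suc m) (h x) \<in> BY m" if x: "x \<in> carrier (Q m)" for x
    unfolding BY_eq using lin_mapD(1)[OF hlin x] by blast
  have "desc f m g"
    unfolding desc_def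
  proof (intro conjI allI impI ballI)
    show "lin_map R (Q m) (Y m) g" by (rule glin)
  next
    fix x assume x: "x \<in> carrier (Q (Suc m))"
    have "g (e (Suc m) x) = f m (e (Suc m) x) \<ominus>\<^bsub>Y m\<^esub> D (Suc m) (g' x)"
      unfolding g_def using hg[OF x] by simp
    also have "\<dots> = \<zero>\<^bsub>Y m\<^esub>" using g'D[OF x] ag_diff_zero[OF Y_ag] lin_mapD(1)[OF fm e_closed[OF x]] by simp
    finally show "g (e (Suc m) x) = \<zero>\<^bsub>Y m\<^esub>" .
  next
    fix x assume m0: "m = 0" and x: "x \<in> carrier (Q 0)"
    have fx: "f 0 x \<in> ZY 0" and fp: "pk 0 (f 0 x) = iota (\<epsilon> x)" using f0[OF x] by auto
    have dB: "D (Suc 0) (h x) \<in> BY 0" using DhB x m0 by simp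
    have dZ: "D (Suc 0) (h x) \<in> ZY 0" using dB BY_sub_ZY by blast
    show "g x \<in> ZY 0" unfolding g_def using m0 ZY_diff[OF fx dZ] by simp
    have "pk 0 (g x) = pk 0 (f 0 x) \<ominus>\<^bsub>Nm 0\<^esub> pk 0 (D (Suc 0) (h x))"
      unfolding g_def using m0 pk_diff[OF fx dZ] by simp
    also have "\<dots> = iota (\<epsilon> x)"
      using fp pk_zero[OF dZ] dB ag_diff_self_zero[OF Nm_ag] pk_c[OF fx] by simp
    finally show "pk 0 (g x) = iota (\<epsilon> x)" .
  next
    fix m' x assume mm: "m = Suc m'" and x: "x \<in> carrier (Q m)"
    have xs: "x \<in> carrier (Q (Suc m'))" using x mm by simp
    have fx: "f m x \<in> carrier (Y (Suc m'))" using lin_mapD(1)[OF fm x] mm by simp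
    have hx: "D (Suc m) (h x) \<in> carrier (Y (Suc m'))" using lin_mapD(1)[OF Dh x] mm by simp
    have hx2: "h x \<in> carrier (Y (Suc (Suc m')))" using lin_mapD(1)[OF hlin x] mm by simp
    have gx: "g x = f m x \<ominus>\<^bsub>Y (Suc m')\<^esub> D (Suc m) (h x)" unfolding g_def using mm by simp
    have "D (Suc m') (g x) = D (Suc m') (f m x) \<ominus>\<^bsub>Y m'\<^esub> D (Suc m') (D (Suc m) (h x))"
      unfolding gx by (rule lin_diff[OF D_lin Y_lm Y_lm fx hx])
    also have "D (Suc m') (D (Suc m) (h x)) = \<zero>\<^bsub>Y m'\<^esub>" using mm DD[OF hx2] by simp
    also have "D (Suc m') (f m x) = f m' (e (Suc m') x)" using fD[of m' x] mm xs m by simp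
    finally have "D (Suc m') (g x) = f m' (e (Suc m') x)"
      using ag_diff_self_zero[OF Y_ag] lin_mapD(1)[OF flin[of m'] e_closed[OF xs]] m mm by simp
    then show "D m (g x) = f m' (e m x)" using mm by simp
  qed
  then show ?thesis by blast
qed

lemma desc_all:
  assumes f: "asc TT f"
  shows "\<exists>g. desc f 0 g"
proof -
  have "i < TT \<Longrightarrow> \<exists>g. desc f (TT - 1 - i) g" for i
  proof (induction i)
    case 0 then show ?case using desc_top[OF f] by auto
  next
    case (Suc i)
    then obtain g' where g': "desc f (TT - 1 - i) g'" by auto
    have eq: "TT - 1 - i = Suc (TT - 1 - Suc i)" using Suc.prems by simp
    show ?case by (rule desc_step[OF f _ g'[unfolded eq]]) (use Suc.prems in simp)
  qed
  from this[of "TT - 1"] show ?thesis unfolding TT_def by simp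
qed

lemma section_exists:
  "\<exists>\<sigma>. lin_map R M (Y 0) \<sigma> \<and> (\<forall>m\<in>carrier M. \<sigma> m \<in> ZY 0 \<and> pk 0 (\<sigma> m) = iota m)"
proof -
  obtain f where f: "asc TT f" using asc_all by blast
  obtain g0 where g0: "desc f 0 g0" using desc_all[OF f] by blast
  have glin: "lin_map R (Q 0) (Y 0) g0"
    and gz: "\<And>x. x \<in> carrier (Q (Suc 0)) \<Longrightarrow> g0 (e (Suc 0) x) = \<zero>\<^bsub>Y 0\<^esub>"
    and gp: "\<And>x. x \<in> carrier (Q 0) \<Longrightarrow> g0 x \<in> ZY 0 \<and> pk 0 (g0 x) = iota (\<epsilon> x)"
    using g0 unfolding desc_def by auto
  have wd: "g0 q = g0 q'" if q: "q \<in> carrier (Q 0)" "q' \<in> carrier (Q 0)" "\<epsilon> q = \<epsilon> q'" for q q'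
  proof -
    have qq: "q \<ominus>\<^bsub>Q 0\<^esub> q' \<in> carrier (Q 0)" using ag_minus_closed[OF Q_ag] q by blast
    have "\<epsilon> (q \<ominus>\<^bsub>Q 0\<^esub> q') = \<epsilon> q \<ominus>\<^bsub>M\<^esub> \<epsilon> q'" by (rule lin_diff[OF eps_lin Q_lm M q(1,2)])
    also have "\<dots> = \<zero>\<^bsub>M\<^esub>" using q lin_mapD(1)[OF eps_lin] ag_diff_zero[OF lm_ag[OF M]] by simp
    finally have "q \<ominus>\<^bsub>Q 0\<^esub> q' \<in> {x \<in> carrier (Q 0). \<epsilon> x = \<zero>\<^bsub>M\<^esub>}" using qq by simp
    then have "q \<ominus>\<^bsub>Q 0\<^esub> q' \<in> e 1 ` carrier (Q 1)" unfolding ker_eps .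
    then obtain y where y0: "y \<in> carrier (Q 1)" "q \<ominus>\<^bsub>Q 0\<^esub> q' = e 1 y" by (rule imageE) simp
    have y: "y \<in> carrier (Q (Suc 0))" "q \<ominus>\<^bsub>Q 0\<^esub> q' = e (Suc 0) y" using y0 by (simp_all add: One_nat_def)
    have "g0 q \<ominus>\<^bsub>Y 0\<^esub> g0 q' = g0 (q \<ominus>\<^bsub>Q 0\<^esub> q')" by (rule lin_diff[OF glin Q_lm Y_lm q(1,2), symmetric])
    also have "\<dots> = \<zero>\<^bsub>Y 0\<^esub>" using gz[OF y(1)] y(2) by simp
    finally show ?thesis using ag_diff_zero[OF Y_ag lin_mapD(1)[OF glin q(1)] lin_mapD(1)[OF glin q(2)]] by simp
  qed
  define \<sigma> where "\<sigma> m = g0 (SOME q. q \<in> carrier (Q 0) \<and> \<epsilon> q = m)" for m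
  have \<sigma>e: "\<sigma> (\<epsilon> q) = g0 q" if q: "q \<in> carrier (Q 0)" for q
  proof -
    have "\<exists>q'. q' \<in> carrier (Q 0) \<and> \<epsilon> q' = \<epsilon> q" using q by blast
    then have "(SOME q'. q' \<in> carrier (Q 0) \<and> \<epsilon> q' = \<epsilon> q) \<in> carrier (Q 0) \<and>
        \<epsilon> (SOME q'. q' \<in> carrier (Q 0) \<and> \<epsilon> q' = \<epsilon> q) = \<epsilon> q" by (rule someI_ex)
    then show ?thesis unfolding \<sigma>_def using wd[OF _ q] by blast
  qed
  have pre: "\<exists>q\<in>carrier (Q 0). \<epsilon> q = m" if "m \<in> carrier M" for m
  proof -
    have "m \<in> \<epsilon> ` carrier (Q 0)" using eps_surj that by simp
    then show ?thesis by (auto simp: image_iff)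
  qed
  have \<sigma>q: "\<sigma> m = g0 q" if "q \<in> carrier (Q 0)" "\<epsilon> q = m" for q m
    using \<sigma>e[OF that(1)] that(2) by simp
  have lin: "lin_map R M (Y 0) \<sigma>"
  proof (rule lin_mapI)
    fix m assume "m \<in> carrier M"
    then obtain q where q: "q \<in> carrier (Q 0)" "\<epsilon> q = m" using pre by blast
    show "\<sigma> m \<in> carrier (Y 0)" using \<sigma>q[OF q] lin_mapD(1)[OF glin q(1)] by simp
  next
    fix m m' assume "m \<in> carrier M" "m' \<in> carrier M"
    then obtain q q' where q: "q \<in> carrier (Q 0)" "\<epsilon> q = m" and q': "q' \<in> carrier (Q 0)" "\<epsilon> q' = m'"
      using pre by meson
    have qq: "q \<oplus>\<^bsub>Q 0\<^esub> q' \<in> carrier (Q 0)" using ag_add_closed[OF Q_ag q(1) q'(1)] .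
    have e: "\<epsilon> (q \<oplus>\<^bsub>Q 0\<^esub> q') = m \<oplus>\<^bsub>M\<^esub> m'" using lin_mapD(2)[OF eps_lin q(1) q'(1)] q(2) q'(2) by simp
    have "\<sigma> (m \<oplus>\<^bsub>M\<^esub> m') = g0 (q \<oplus>\<^bsub>Q 0\<^esub> q')" by (rule \<sigma>q[OF qq e])
    also have "\<dots> = g0 q \<oplus>\<^bsub>Y 0\<^esub> g0 q'" by (rule lin_mapD(2)[OF glin q(1) q'(1)])
    finally show "\<sigma> (m \<oplus>\<^bsub>M\<^esub> m') = \<sigma> m \<oplus>\<^bsub>Y 0\<^esub> \<sigma> m'" using \<sigma>q[OF q] \<sigma>q[OF q'] by simp
  next
    fix r m assume r: "r \<in> carrier R" and "m \<in> carrier M"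
    then obtain q where q: "q \<in> carrier (Q 0)" "\<epsilon> q = m" using pre by blast
    have qq: "r \<odot>\<^bsub>Q 0\<^esub> q \<in> carrier (Q 0)" using lm_closed[OF Q_lm r q(1)] .
    have e: "\<epsilon> (r \<odot>\<^bsub>Q 0\<^esub> q) = r \<odot>\<^bsub>M\<^esub> m" using lin_mapD(3)[OF eps_lin r q(1)] q(2) by simp
    have "\<sigma> (r \<odot>\<^bsub>M\<^esub> m) = g0 (r \<odot>\<^bsub>Q 0\<^esub> q)" by (rule \<sigma>q[OF qq e])
    also have "\<dots> = r \<odot>\<^bsub>Y 0\<^esub> g0 q" by (rule lin_mapD(3)[OF glin r q(1)])
    finally show "\<sigma> (r \<odot>\<^bsub>M\<^esub> m) = r \<odot>\<^bsub>Y 0\<^esub> \<sigma> m" using \<sigma>q[OF q] by simp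
  qed
  have "\<forall>m\<in>carrier M. \<sigma> m \<in> ZY 0 \<and> pk 0 (\<sigma> m) = iota m"
  proof
    fix m assume "m \<in> carrier M"
    then obtain q where q: "q \<in> carrier (Q 0)" "\<epsilon> q = m" using pre by blast
    have "\<sigma> m = g0 q" using \<sigma>e[OF q(1)] q(2) by simp
    then show "\<sigma> m \<in> ZY 0 \<and> pk 0 (\<sigma> m) = iota m" using gp[OF q(1)] q(2) by simp
  qed
  then show ?thesis using lin by blast
qed

lemma retraction_exists:
  "\<exists>\<rho>. lin_map R (Y 0) M \<rho> \<and> (\<forall>z\<in>ZY 0. \<rho> z = pk 0 z 0)"
proof -
  have "split_at (j0 - 1)" by (rule split_all) simp
  then obtain s where s1: "lin_map R (X (j0 - 1)) (X j0) s" and s2: "\<And>z. z \<in> Zc (j0 - 1) \<Longrightarrow> d j0 (s z) = z"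
    unfolding split_at_def by auto
  have Y0: "Y 0 = X j0" by (simp add: Y_def)
  have pk0: "pk 0 = \<pi> j0" by (simp add: pk_def)
  have Nm0: "Nm 0 = pow_mod M (n j0)" by (simp add: Nm_def)
  define u where "u x = x \<ominus>\<^bsub>X j0\<^esub> s (d j0 x)" for x
  have ulin: "lin_map R (X j0) (X j0) u"
    unfolding u_def
    by (rule lin_map_diff[OF _ lin_comp[OF d_lin0 s1] lm]) (rule lin_mapI, auto)
  have uZ: "u x \<in> Zc j0" if x: "x \<in> carrier (X j0)" for x
  proof -
    have dx: "d j0 x \<in> Zc (j0 - 1)" using d_in_Z[OF x] .
    have "d j0 (u x) = d j0 x \<ominus>\<^bsub>X (j0 - 1)\<^esub> d j0 (s (d j0 x))"
      unfolding u_def by (rule lin_diff[OF d_lin0 lm lm x]) (use lin_mapD(1)[OF s1] d_closed0[OF x] in blast)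
    also have "\<dots> = \<zero>\<^bsub>X (j0 - 1)\<^esub>" using s2[OF dx] ag_diff_zero[OF ag] d_closed0[OF x] by simp
    finally show ?thesis unfolding cycles_def using lin_mapD(1)[OF ulin x] by simp
  qed
  have uz: "u z = z" if z: "z \<in> Zc j0" for z
  proof -
    have zc: "z \<in> carrier (X j0)" and dz: "d j0 z = \<zero>\<^bsub>X (j0 - 1)\<^esub>" using z unfolding cycles_def by auto
    have "s \<zero>\<^bsub>X (j0 - 1)\<^esub> = \<zero>\<^bsub>X j0\<^esub>" using lin_zero[OF s1 lm lm] .
    then show "u z = z" unfolding u_def using dz ag_diff_self_zero[OF ag zc] by simp
  qed
  have pj: "\<And>z. z \<in> Zc j0 \<Longrightarrow> \<pi> j0 z \<in> carrier (pow_mod M (n j0))" by (rule pi_c) simp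
  define \<rho> where "\<rho> x = \<pi> j0 (u x) 0" for x
  have "lin_map R (X j0) M \<rho>"
  proof (rule lin_mapI)
    fix x assume x: "x \<in> carrier (X j0)"
    show "\<rho> x \<in> carrier M" unfolding \<rho>_def using pj[OF uZ[OF x]] nj0 by simp
  next
    fix x y assume x: "x \<in> carrier (X j0)" and y: "y \<in> carrier (X j0)"
    show "\<rho> (x \<oplus>\<^bsub>X j0\<^esub> y) = \<rho> x \<oplus>\<^bsub>M\<^esub> \<rho> y"
      unfolding \<rho>_def using lin_mapD(2)[OF ulin x y] pi_add[of j0, OF _ uZ[OF x] uZ[OF y]] by simp
  next
    fix r x assume r: "r \<in> carrier R" and x: "x \<in> carrier (X j0)"
    show "\<rho> (r \<odot>\<^bsub>X j0\<^esub> x) = r \<odot>\<^bsub>M\<^esub> \<rho> x"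
      unfolding \<rho>_def using lin_mapD(3)[OF ulin r x] pi_smult[of j0, OF _ r uZ[OF x]] by simp
  qed
  moreover have "\<forall>z\<in>ZY 0. \<rho> z = pk 0 z 0" unfolding \<rho>_def pk0 using uz by simp
  ultimately show ?thesis unfolding Y0 by blast
qed

lemma M_retract:
  "\<exists>N s p. lin_map R M (free_mod R N) s \<and> lin_map R (free_mod R N) M p \<and> (\<forall>x\<in>carrier M. p (s x) = x)"
proof -
  obtain \<sigma> where \<sigma>: "lin_map R M (Y 0) \<sigma>" "\<And>m. m \<in> carrier M \<Longrightarrow> \<sigma> m \<in> ZY 0 \<and> pk 0 (\<sigma> m) = iota m"
    using section_exists by blast
  obtain \<rho> where \<rho>: "lin_map R (Y 0) M \<rho>" "\<And>z. z \<in> ZY 0 \<Longrightarrow> \<rho> z = pk 0 z 0"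
    using retraction_exists by blast
  obtain N S P where S: "lin_map R (Y 0) (free_mod R N) S" and P: "lin_map R (free_mod R N) (Y 0) P"
    and PS: "\<And>x. x \<in> carrier (Y 0) \<Longrightarrow> P (S x) = x" using projectiveD[OF Y_proj] by blast
  have "\<forall>m\<in>carrier M. \<rho> (P (S (\<sigma> m))) = m"
  proof
    fix m assume m: "m \<in> carrier M"
    have "\<rho> (P (S (\<sigma> m))) = \<rho> (\<sigma> m)" using PS lin_mapD(1)[OF \<sigma>(1) m] by simp
    also have "\<dots> = m" using \<rho>(2) \<sigma>(2)[OF m] by (simp add: iota_def)
    finally show "\<rho> (P (S (\<sigma> m))) = m" .
  qed
  then show ?thesis using lin_comp[OF \<sigma>(1) S] lin_comp[OF P \<rho>(1)] by blast
qed

end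

lemma zero_projective:
  assumes fp: "fin_pres R M" and z: "is_zero_mod M"
  shows "projective R M"
proof -
  have M: "left_module R M" using fp by (simp add: fin_pres_def)
  have R: "ring R" using lm_ring[OF M] .
  have s: "lin_map R M (free_mod R 0) (\<lambda>x. \<zero>\<^bsub>free_mod R 0\<^esub>)" by (rule lin_map_zero[OF free_mod_lm[OF R]])
  have p: "lin_map R (free_mod R 0) M (\<lambda>x. \<zero>\<^bsub>M\<^esub>)" by (rule lin_map_zero[OF M])
  have "\<forall>x\<in>carrier M. \<zero>\<^bsub>M\<^esub> = x" using z unfolding is_zero_mod_def by simp
  then show ?thesis unfolding projective_def using fp s p by blast
qed

definition hpo :: "'r ring \<Rightarrow> (int \<Rightarrow> ('r, 'b) module) \<Rightarrow> (int \<Rightarrow> 'b \<Rightarrow> 'b) \<Rightarrow> ('r, 'm) module \<Rightarrow>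
    nat \<Rightarrow> int \<Rightarrow> ('b \<Rightarrow> nat \<Rightarrow> 'm) \<Rightarrow> bool" where
  "hpo R X d M k j p \<longleftrightarrow> (\<forall>z\<in>cycles X d j. p z \<in> carrier (pow_mod M k))
     \<and> (\<forall>z\<in>cycles X d j. \<forall>z'\<in>cycles X d j. p (z \<oplus>\<^bsub>X j\<^esub> z') = p z \<oplus>\<^bsub>pow_mod M k\<^esub> p z')
     \<and> (\<forall>r\<in>carrier R. \<forall>z\<in>cycles X d j. p (r \<odot>\<^bsub>X j\<^esub> z) = r \<odot>\<^bsub>pow_mod M k\<^esub> p z)
     \<and> (\<forall>y\<in>carrier (pow_mod M k). \<exists>z\<in>cycles X d j. p z = y)
     \<and> (\<forall>z\<in>cycles X d j. p z = \<zero>\<^bsub>pow_mod M k\<^esub> \<longleftrightarrow> z \<in> boundaries X d j)"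

lemma hpo_ex: "is_complex R X d \<Longrightarrow> left_module R M \<Longrightarrow> mod_iso R (homology X d j) (pow_mod M k) \<Longrightarrow>
   \<exists>p. hpo R X d M k j p"
  unfolding hpo_def by (rule cplx.homology_pi[OF cplx.intro])

theorem corollary1p3:
  fixes R :: "'r ring"
    and M :: "('r, 'm) module"
    and X :: "int \<Rightarrow> ('r, 'b) module" and d :: "int \<Rightarrow> 'b \<Rightarrow> 'b"
    and Q :: "nat \<Rightarrow> ('r, 'q) module" and e :: "nat \<Rightarrow> 'q \<Rightarrow> 'q" and \<epsilon> :: "'q \<Rightarrow> 'm"
  assumes coh: "left_coherent R"
    and fp: "fin_pres R M"
    and qpd_fin: "is_zero_mod M \<or> fin_qp_resolution R M X d"
    and res: "proj_resolution R M Q e \<epsilon>"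
    and ext: "ext_vanish_pos R Q e (dsum M (ring_mod R))"
  shows "projective R M"
proof (cases "is_zero_mod M")
  case True
  then show ?thesis by (rule zero_projective[OF fp])
next
  case False
  then have qp: "fin_qp_resolution R M X d" using qpd_fin by blast
  have M: "left_module R M" using fp by (simp add: fin_pres_def)
  have cx: "is_complex R X d" and projX: "\<And>i. projective R (X i)"
    using qp unfolding fin_qp_resolution_def by auto
  interpret cplx R X d by (rule cplx.intro[OF cx])
  obtain a where a: "\<And>i. cx_nonzero X i \<Longrightarrow> a \<le> i" using qp unfolding fin_qp_resolution_def by blast
  obtain b where b: "\<And>i. cx_nonzero X i \<Longrightarrow> i \<le> b" using qp unfolding fin_qp_resolution_def by blast
  define I where "I = cx_inf X"
  obtain nn :: "int \<Rightarrow> nat" where iso: "\<And>j. j \<ge> I \<Longrightarrow> mod_iso R (homology X d j) (pow_mod M (nn j))"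
    and nz: "\<exists>j\<ge>I. nn j \<noteq> 0"
    using qp unfolding fin_qp_resolution_def I_def by blast
  have bdd: "bdd_below {i. cx_nonzero X i}" unfolding bdd_below_def using a by blast
  have bot: "carrier (X j) = {\<zero>\<^bsub>X j\<^esub>}" if j: "j < I" for j
  proof -
    have "\<not> cx_nonzero X j"
    proof
      assume "cx_nonzero X j"
      then have "I \<le> j" unfolding I_def cx_inf_def using cInf_lower[OF _ bdd] by blast
      then show False using j by simp
    qed
    then show ?thesis unfolding cx_nonzero_def is_zero_mod_def by simp
  qed
  have top: "carrier (X j) = {\<zero>\<^bsub>X j\<^esub>}" if j: "b < j" for j
  proof -
    have "\<not> cx_nonzero X j" using b[of j] j by auto
    then show ?thesis unfolding cx_nonzero_def is_zero_mod_def by simp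
  qed
  obtain j1 where j1: "j1 \<ge> I" "nn j1 \<noteq> 0" using nz by blast
  have ex: "\<exists>k. nn (I + int k) \<noteq> 0" using j1 by (intro exI[of _ "nat (j1 - I)"]) simp
  define k0 where "k0 = (LEAST k. nn (I + int k) \<noteq> 0)"
  define j0 where "j0 = I + int k0"
  have nj0: "0 < nn j0" unfolding j0_def k0_def using LeastI_ex[OF ex] by simp
  have j0I: "I \<le> j0" unfolding j0_def by simp
  define \<pi> where "\<pi> j = (SOME p. hpo R X d M (nn j) j p)" for j
  have hp: "hpo R X d M (nn j) j (\<pi> j)" if "I \<le> j" for j
    unfolding \<pi>_def by (rule someI_ex[OF hpo_ex[OF cx M iso[OF that]]])
  have p1: "\<And>j z. I \<le> j \<Longrightarrow> z \<in> Zc j \<Longrightarrow> \<pi> j z \<in> carrier (pow_mod M (nn j))"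
    using hp unfolding hpo_def by blast
  have p2: "\<And>j z z'. I \<le> j \<Longrightarrow> z \<in> Zc j \<Longrightarrow> z' \<in> Zc j \<Longrightarrow>
        \<pi> j (z \<oplus>\<^bsub>X j\<^esub> z') = \<pi> j z \<oplus>\<^bsub>pow_mod M (nn j)\<^esub> \<pi> j z'"
    using hp unfolding hpo_def by blast
  have p3: "\<And>j r z. I \<le> j \<Longrightarrow> r \<in> carrier R \<Longrightarrow> z \<in> Zc j \<Longrightarrow>
        \<pi> j (r \<odot>\<^bsub>X j\<^esub> z) = r \<odot>\<^bsub>pow_mod M (nn j)\<^esub> \<pi> j z"
    using hp unfolding hpo_def by blast
  have p4: "\<And>j y. I \<le> j \<Longrightarrow> y \<in> carrier (pow_mod M (nn j)) \<Longrightarrow> \<exists>z\<in>Zc j. \<pi> j z = y"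
    using hp unfolding hpo_def by blast
  have p5: "\<And>j z. I \<le> j \<Longrightarrow> z \<in> Zc j \<Longrightarrow> (\<pi> j z = \<zero>\<^bsub>pow_mod M (nn j)\<^esub>) = (z \<in> Bd j)"
    using hp unfolding hpo_def by blast
  have low: "z \<in> Bd j" if j: "j < j0" and z: "z \<in> Zc j" for j z
  proof (cases "j < I")
    case True
    then have "z = \<zero>\<^bsub>X j\<^esub>" using bot z Z_sub by blast
    then show ?thesis using B_zero by simp
  next
    case False
    then have jI: "I \<le> j" by simp
    have "nat (j - I) < k0" using j False unfolding j0_def by simp
    then have "nn (I + int (nat (j - I))) = 0" unfolding k0_def using not_less_Least by blast
    then have nj: "nn j = 0" using False by simp
    have "\<pi> j z \<in> carrier (pow_mod M (nn j))" using p1[OF jI z] .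
    then have "\<pi> j z = \<zero>\<^bsub>pow_mod M (nn j)\<^esub>" unfolding nj by (auto intro!: ext)
    then show ?thesis using p5[OF jI z] by simp
  qed
  have extM: "ext_vanish_pos R Q e M" by (rule ext_dsum_left[OF M ext])
  have extR: "ext_vanish_pos R Q e (ring_mod R)" by (rule ext_dsum_right[OF M ext])
  have mc: "main_ctx R X d M Q e \<epsilon> nn \<pi> j0 I b"
  proof (rule main_ctx.intro[OF cplx_axioms], unfold_locales)
    show "\<And>i. projective R (X i)" by (rule projX)
    show "left_module R M" by (rule M)
    show "proj_resolution R M Q e \<epsilon>" by (rule res)
    show "ext_vanish_pos R Q e M" by (rule extM)
    show "ext_vanish_pos R Q e (ring_mod R)" by (rule extR)
    show "0 < nn j0" by (rule nj0)
    show "\<And>j z. j < j0 \<Longrightarrow> z \<in> Zc j \<Longrightarrow> z \<in> Bd j" by (rule low)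
    show "\<And>j. j < I \<Longrightarrow> carrier (X j) = {\<zero>\<^bsub>X j\<^esub>}" by (rule bot)
    show "\<And>j. b < j \<Longrightarrow> carrier (X j) = {\<zero>\<^bsub>X j\<^esub>}" by (rule top)
    show "\<And>j z. j0 \<le> j \<Longrightarrow> z \<in> Zc j \<Longrightarrow> \<pi> j z \<in> carrier (pow_mod M (nn j))"
      using p1 j0I by simp
    show "\<And>j z z'. j0 \<le> j \<Longrightarrow> z \<in> Zc j \<Longrightarrow> z' \<in> Zc j \<Longrightarrow>
        \<pi> j (z \<oplus>\<^bsub>X j\<^esub> z') = \<pi> j z \<oplus>\<^bsub>pow_mod M (nn j)\<^esub> \<pi> j z'"
      using p2 j0I by simp
    show "\<And>j r z. j0 \<le> j \<Longrightarrow> r \<in> carrier R \<Longrightarrow> z \<in> Zc j \<Longrightarrow>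
        \<pi> j (r \<odot>\<^bsub>X j\<^esub> z) = r \<odot>\<^bsub>pow_mod M (nn j)\<^esub> \<pi> j z"
      using p3 j0I by simp
    show "\<And>j y. j0 \<le> j \<Longrightarrow> y \<in> carrier (pow_mod M (nn j)) \<Longrightarrow> \<exists>z\<in>Zc j. \<pi> j z = y"
      using p4 j0I by simp
    show "\<And>j z. j0 \<le> j \<Longrightarrow> z \<in> Zc j \<Longrightarrow> (\<pi> j z = \<zero>\<^bsub>pow_mod M (nn j)\<^esub>) = (z \<in> Bd j)"
      using p5 j0I by simp
  qed
  obtain N s p where "lin_map R M (free_mod R N) s" "lin_map R (free_mod R N) M p"
    "\<forall>x\<in>carrier M. p (s x) = x" using main_ctx.M_retract[OF mc] by blast
  then show ?thesis unfolding projective_def using fp by blast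
qed

end
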